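(* Let $n\ge3$ and $k\ge0$ be integers. Then: (1) If $S$ is a maximal reversible set in $G_n^k$, then $S$ is a maximal independent set in $G_n^k$. (2) If $n>k$ and $S$ is a maximal reversible set in $G_n^k$, then $S$ is a canonical reversible set. (3) If $S$ is a maximal reversible set in $G_n^k$ and $S$ is not a canonical reversible set, then $n\le k$ and \[|S|\le \frac{(k+1)(k+2)}{2}-\frac{n(n-1)}{2}+1.\]
   Context: For integers $n\ge3$, $k\ge0$, the crown $S_n^k$ is the poset with ground set $A\cup B$, $A=\{a_1,\dots,a_{n+k}\}$, $B=\{b_1,\dots,b_{n+k}\}$, indices cyclic modulo $n+k$; elements of $A$ are pairwise incomparable, as are elements of $B$, and $a_i$ is incomparable to $b_j$ when $j\in\{i,i+1,\dots,i+k\}$ (mod $n+k$), while $a_i<b_j$ otherwise. $\mathrm{Inc}(A,B)$ is the set of pairs $(a,b)\in A\times B$ with $a$ incomparable to $b$. The graph $G_n^k$ has vertex set $\mathrm{Inc}(A,B)$, with $(a,b)$ adjacent to $(x,y)$ iff $a<y$ and $x<b$ in $S_n^k$. A set $R\subseteq \mathrm{Inc}(A,B)$ is reversible if there is a linear extension $L$ of $S_n^k$ with $b<a$ in $L$ for all $(a,b)\in R$; a maximal reversible set is one maximal under inclusion among reversible subsets of $\mathrm{Inc}(A,B)$. A subset $X\subseteq A$ is contiguous if it is a block of cyclically consecutive elements of $A$ (the empty set and $A$ count as contiguous). A sequence $\sigma=(x_1,\dots,x_r)$ of distinct elements of $A$ is $h$-contiguous if $\{x_1,\dots,x_i\}$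 is contiguous for every $i\le r$. For such $\sigma$, $T(\sigma)$ is defined recursively: it contains every $(x_1,b)\in\mathrm{Inc}(A,B)$, and for $1\le i<r$ it contains $(x_{i+1},b)$ exactly when $(x_{i+1},b)\in\mathrm{Inc}(A,B)$ and $(x_i,b)\in T(\sigma)$. A canonical reversible set is a set of the form $T(\sigma)$ with $\sigma$ an $h$-contiguous sequence of length $k+1$. *)

theory Defs
  imports Main Complex_Main
begin

text \<open>Elements of the crown S_n^k: EA i stands for a_i, EB j for b_j, with indices
  in {0..<n+k} (cyclic modulo n+k).\<close>
datatype elt = EA nat | EB nat

definition setA :: "nat \<Rightarrow> nat \<Rightarrow> elt set" where
  "setA n k = EA ` {..<n+k}"

definition setB :: "nat \<Rightarrow> nat \<Rightarrow> elt set" where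
  "setB n k = EB ` {..<n+k}"

definition ground :: "nat \<Rightarrow> nat \<Rightarrow> elt set" where
  "ground n k = setA n k \<union> setB n k"

text \<open>Strict order of the crown: a_i < b_j iff j is not in {i,...,i+k} mod (n+k),
  i.e. iff (j - i) mod (n+k) > k.  No other strict relations.\<close>
definition crown_less :: "nat \<Rightarrow> nat \<Rightarrow> elt \<Rightarrow> elt \<Rightarrow> bool" where
  "crown_less n k x y \<longleftrightarrow>
     (\<exists>i j. x = EA i \<and> y = EB j \<and> i < n+k \<and> j < n+k \<and>
            (j + (n+k) - i) mod (n+k) > k)"

definition incomparable :: "nat \<Rightarrow> nat \<Rightarrow> elt \<Rightarrow> elt \<Rightarrow> bool" where
  "incomparable n k x y \<longleftrightarrow> \<not> crown_less n k x y \<and> \<not> crown_less n k y x"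

definition Inc :: "nat \<Rightarrow> nat \<Rightarrow> (elt \<times> elt) set" where
  "Inc n k = {(a, b). a \<in> setA n k \<and> b \<in> setB n k \<and> incomparable n k a b}"

definition adj :: "nat \<Rightarrow> nat \<Rightarrow> elt \<times> elt \<Rightarrow> elt \<times> elt \<Rightarrow> bool" where
  "adj n k u v \<longleftrightarrow> crown_less n k (fst u) (snd v) \<and> crown_less n k (fst v) (snd u)"

definition independent :: "nat \<Rightarrow> nat \<Rightarrow> (elt \<times> elt) set \<Rightarrow> bool" where
  "independent n k S \<longleftrightarrow> S \<subseteq> Inc n k \<and> (\<forall>u\<in>S. \<forall>v\<in>S. \<not> adj n k u v)"

definition maximal_independent :: "nat \<Rightarrow> nat \<Rightarrow> (elt \<times> elt) set \<Rightarrow> bool" where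
  "maximal_independent n k S \<longleftrightarrow> independent n k S \<and>
     (\<forall>S'. S \<subseteq> S' \<and> independent n k S' \<longrightarrow> S' = S)"

definition linear_extension :: "nat \<Rightarrow> nat \<Rightarrow> (elt \<times> elt) set \<Rightarrow> bool" where
  "linear_extension n k L \<longleftrightarrow>
     L \<subseteq> ground n k \<times> ground n k \<and>
     (\<forall>x. (x, x) \<notin> L) \<and> trans L \<and>
     (\<forall>x\<in>ground n k. \<forall>y\<in>ground n k. x \<noteq> y \<longrightarrow> (x, y) \<in> L \<or> (y, x) \<in> L) \<and>
     (\<forall>x y. crown_less n k x y \<longrightarrow> (x, y) \<in> L)"

definition reversible :: "nat \<Rightarrow> nat \<Rightarrow> (elt \<times> elt) set \<Rightarrow> bool" where
  "reversible n k R \<longleftrightarrow> R \<subseteq> Inc n k \<and>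
     (\<exists>L. linear_extension n k L \<and> (\<forall>(a, b)\<in>R. (b, a) \<in> L))"

definition maximal_reversible :: "nat \<Rightarrow> nat \<Rightarrow> (elt \<times> elt) set \<Rightarrow> bool" where
  "maximal_reversible n k R \<longleftrightarrow> reversible n k R \<and>
     (\<forall>R'. R \<subseteq> R' \<and> reversible n k R' \<longrightarrow> R' = R)"

definition contiguous :: "nat \<Rightarrow> nat \<Rightarrow> elt set \<Rightarrow> bool" where
  "contiguous n k X \<longleftrightarrow> X = {} \<or> X = setA n k \<or>
     (\<exists>s < n+k. \<exists>l \<le> n+k. X = {EA ((s + t) mod (n+k)) | t. t < l})"

definition h_contiguous :: "nat \<Rightarrow> nat \<Rightarrow> elt list \<Rightarrow> bool" where
  "h_contiguous n k \<sigma> \<longleftrightarrow> distinct \<sigma> \<and> set \<sigma> \<subseteq> setA n k \<and>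
     (\<forall>i \<le> length \<sigma>. contiguous n k (set (take i \<sigma>)))"

text \<open>Tcol n k \<sigma> i = set of b with (x_{i+1}, b) in T(\<sigma>) (0-based index i), following the
  recursive definition of T(\<sigma>).\<close>
fun Tcol :: "nat \<Rightarrow> nat \<Rightarrow> elt list \<Rightarrow> nat \<Rightarrow> elt set" where
  "Tcol n k \<sigma> 0 = {b. (\<sigma> ! 0, b) \<in> Inc n k}"
| "Tcol n k \<sigma> (Suc i) = {b. (\<sigma> ! Suc i, b) \<in> Inc n k \<and> b \<in> Tcol n k \<sigma> i}"

definition Tset :: "nat \<Rightarrow> nat \<Rightarrow> elt list \<Rightarrow> (elt \<times> elt) set" where
  "Tset n k \<sigma> = {(\<sigma> ! i, b) | i b. i < length \<sigma> \<and> b \<in> Tcol n k \<sigma> i}"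

definition canonical_reversible :: "nat \<Rightarrow> nat \<Rightarrow> (elt \<times> elt) set \<Rightarrow> bool" where
  "canonical_reversible n k S \<longleftrightarrow>
     (\<exists>\<sigma>. h_contiguous n k \<sigma> \<and> length \<sigma> = k + 1 \<and> S = Tset n k \<sigma>)"

end

theory Submission
  imports Defs
begin

definition move :: "(elt \<times> elt) set \<Rightarrow> elt \<Rightarrow> elt \<Rightarrow> (elt \<times> elt) set" where
  "move L e p = {(x,y). (x,y) \<in> L \<and> x \<noteq> e \<and> y \<noteq> e}
      \<union> {(x,y). y = e \<and> x \<noteq> e \<and> (x = p \<or> (x,p) \<in> L)}
      \<union> {(x,y). x = e \<and> y \<noteq> e \<and> (p,y) \<in> L}"

lemma move_iff: "(x,y) \<in> move L e p \<longleftrightarrow>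
   (x \<noteq> e \<and> y \<noteq> e \<and> (x,y) \<in> L) \<or> (y = e \<and> x \<noteq> e \<and> (x = p \<or> (x,p) \<in> L))
   \<or> (x = e \<and> y \<noteq> e \<and> (p,y) \<in> L)"
  unfolding move_def by auto

lemma linext_move:
  assumes L: "linear_extension n k L" and e: "e \<in> ground n k" and p: "p \<in> ground n k"
    and ep: "e \<noteq> p"
    and up: "\<And>z. crown_less n k e z \<Longrightarrow> (p,z) \<in> L"
    and dn: "\<And>z. crown_less n k z e \<Longrightarrow> z = p \<or> (z,p) \<in> L"
  shows "linear_extension n k (move L e p)"
proof -
  have sub: "L \<subseteq> ground n k \<times> ground n k" and irr: "\<And>x. (x,x) \<notin> L" and tr: "trans L"
    and tot: "\<And>x y. x \<in> ground n k \<Longrightarrow> y \<in> ground n k \<Longrightarrow> x \<noteq> y \<Longrightarrow> (x,y) \<in> L \<or> (y,x) \<in> L"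
    and ext: "\<And>x y. crown_less n k x y \<Longrightarrow> (x,y) \<in> L"
    using L unfolding linear_extension_def by blast+
  have trL: "\<And>x y z. (x,y) \<in> L \<Longrightarrow> (y,z) \<in> L \<Longrightarrow> (x,z) \<in> L" using tr by (meson transD)
  show ?thesis unfolding linear_extension_def
  proof (intro conjI allI ballI impI)
    show "move L e p \<subseteq> ground n k \<times> ground n k"
      using sub e p by (auto simp: move_iff)
    fix x show "(x,x) \<notin> move L e p" using irr by (auto simp: move_iff)
  next
    show "trans (move L e p)"
    proof (rule transI)
      fix x y z assume 1: "(x,y) \<in> move L e p" and 2: "(y,z) \<in> move L e p"
      show "(x,z) \<in> move L e p"
        using 1 2 trL irr ep unfolding move_iff by metis
    qed
  next
    fix x y assume x: "x \<in> ground n k" and y: "y \<in> ground n k" and xy: "x \<noteq> y"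
    show "(x,y) \<in> move L e p \<or> (y,x) \<in> move L e p"
      using tot[OF x y xy] tot[OF x p] tot[OF y p] xy unfolding move_iff by metis
  next
    fix x y assume c: "crown_less n k x y"
    have "x \<noteq> y" using c ext irr by metis
    then show "(x,y) \<in> move L e p"
      using ext[OF c] up[of y] dn[of x] c unfolding move_iff by metis
  qed
qed


lemma cl_EB[simp]: "\<not> crown_less n k (EB j) y" unfolding crown_less_def by auto
lemma cl_EA2[simp]: "\<not> crown_less n k x (EA i)" unfolding crown_less_def by auto
lemma cl_EA_EB: "crown_less n k (EA i) (EB j) \<longleftrightarrow> i < n+k \<and> j < n+k \<and> (j + (n+k) - i) mod (n+k) > k"
  unfolding crown_less_def by auto

lemma cl_irrefl[simp]: "\<not> crown_less n k x x" unfolding crown_less_def by auto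

lemma finite_ground: "finite (ground n k)"
  unfolding ground_def setA_def setB_def by auto

lemma linext_props:
  assumes "linear_extension n k L"
  shows "L \<subseteq> ground n k \<times> ground n k" "\<And>x. (x,x) \<notin> L" "trans L"
    "\<And>x y. x \<in> ground n k \<Longrightarrow> y \<in> ground n k \<Longrightarrow> x \<noteq> y \<Longrightarrow> (x,y) \<in> L \<or> (y,x) \<in> L"
    "\<And>x y. crown_less n k x y \<Longrightarrow> (x,y) \<in> L"
  using assms unfolding linear_extension_def by blast+

lemma linext_trans: "linear_extension n k L \<Longrightarrow> (x,y) \<in> L \<Longrightarrow> (y,z) \<in> L \<Longrightarrow> (x,z) \<in> L"
  using linext_props(3) by (meson transD)

lemma linext_asym: "linear_extension n k L \<Longrightarrow> (x,y) \<in> L \<Longrightarrow> (y,x) \<notin> L"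
  using linext_props(2) linext_trans by metis

lemma Lmax_exists:
  assumes L: "linear_extension n k L" and fin: "finite D" and ne: "D \<noteq> {}" and sub: "D \<subseteq> ground n k"
  shows "\<exists>p\<in>D. \<forall>z\<in>D. z = p \<or> (z,p) \<in> L"
  using fin ne sub
proof (induction D rule: finite_ne_induct)
  case (singleton x) then show ?case by auto
next
  case (insert x F)
  then obtain p where p: "p \<in> F" "\<forall>z\<in>F. z = p \<or> (z,p) \<in> L" by auto
  have "x \<noteq> p" using insert p by auto
  have xg: "x \<in> ground n k" and pg: "p \<in> ground n k" using insert.prems p by auto
  then have "(x,p) \<in> L \<or> (p,x) \<in> L" using linext_props(4)[OF L xg pg] \<open>x \<noteq> p\<close> by auto
  then show ?case
  proof
    assume "(x,p) \<in> L" then show ?thesis using p by auto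
  next
    assume "(p,x) \<in> L" then show ?thesis using p linext_trans[OF L] by (metis insert_iff)
  qed
qed

definition RL :: "nat \<Rightarrow> nat \<Rightarrow> (elt \<times> elt) set \<Rightarrow> (elt \<times> elt) set" where
  "RL n k L = {(a,b). (a,b) \<in> Inc n k \<and> (b,a) \<in> L}"

lemma reversible_RL: "linear_extension n k L \<Longrightarrow> reversible n k (RL n k L)"
  unfolding reversible_def RL_def by auto

lemma maxrev_RL:
  assumes "maximal_reversible n k R"
  shows "\<exists>L. linear_extension n k L \<and> R = RL n k L"
proof -
  from assms obtain L where L: "linear_extension n k L" and R: "R \<subseteq> Inc n k"
    and rev: "\<forall>(a,b)\<in>R. (b,a) \<in> L" and mx: "\<forall>R'. R \<subseteq> R' \<and> reversible n k R' \<longrightarrow> R' = R"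
    unfolding maximal_reversible_def reversible_def by blast
  have "R \<subseteq> RL n k L" using R rev unfolding RL_def by auto
  then have "RL n k L = R" using mx reversible_RL[OF L] by blast
  then show ?thesis using L by auto
qed

lemma Inc_mem: "(a,b) \<in> Inc n k \<Longrightarrow> a \<in> setA n k \<and> b \<in> setB n k \<and> \<not> crown_less n k a b"
  unfolding Inc_def incomparable_def by auto

lemma setA_ground: "x \<in> setA n k \<Longrightarrow> x \<in> ground n k" unfolding ground_def by auto
lemma setB_ground: "x \<in> setB n k \<Longrightarrow> x \<in> ground n k" unfolding ground_def by auto

lemma ground_cases: "x \<in> ground n k \<Longrightarrow> (\<exists>i<n+k. x = EA i) \<or> (\<exists>j<n+k. x = EB j)"
  unfolding ground_def setA_def setB_def by auto

lemma Inc_intro: "a \<in> setA n k \<Longrightarrow> b \<in> setB n k \<Longrightarrow> \<not> crown_less n k a b \<Longrightarrow> (a,b) \<in> Inc n k"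
  unfolding Inc_def incomparable_def setA_def setB_def by auto

lemma below_exists:
  assumes "n \<ge> 2" "b \<in> setB n k"
  shows "\<exists>z. crown_less n k z b"
proof -
  obtain j where j: "j < n+k" "b = EB j" using assms unfolding setB_def by auto
  define i where "i = (j+1) mod (n+k)"
  have "n+k > 0" using j by auto
  then have "i < n+k" unfolding i_def by auto
  moreover have "(j + (n+k) - i) mod (n+k) = n+k-1"
  proof (cases "j+1 < n+k")
    case True then have "i = j+1" unfolding i_def by auto
    then show ?thesis using True by auto
  next
    case False then have "j + 1 = n+k" using j by auto
    then have "j = n+k-1" "i = 0" unfolding i_def by auto
    then have e: "j + (n+k) - i = (n+k-1) + (n+k)" by auto
    have "((n+k-1) + (n+k)) mod (n+k) = (n+k-1) mod (n+k)" by (rule mod_add_self2)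
    also have "\<dots> = n+k-1" using j by auto
    finally show ?thesis using e by simp
  qed
  ultimately have "crown_less n k (EA i) (EB j)" using j assms unfolding cl_EA_EB by auto
  then show ?thesis using j by auto
qed

theorem part1:
  assumes n: "n \<ge> 3" and R: "maximal_reversible n k R"
  shows "maximal_independent n k R"
proof -
  obtain L where L: "linear_extension n k L" and RL: "R = RL n k L" using maxrev_RL[OF R] by auto
  have mx: "\<And>R'. R \<subseteq> R' \<Longrightarrow> reversible n k R' \<Longrightarrow> R' = R"
    using R unfolding maximal_reversible_def by blast
  have RInc: "R \<subseteq> Inc n k" using RL unfolding RL_def by auto
  have adjsym: "\<And>u v. adj n k u v \<Longrightarrow> adj n k v u" unfolding adj_def by auto
  have ind: "independent n k R"
    unfolding independent_def
  proof (intro conjI ballI RInc)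
    fix u v assume u: "u \<in> R" and v: "v \<in> R"
    obtain a b x y where uv: "u = (a,b)" "v = (x,y)" by (cases u, cases v) auto
    show "\<not> adj n k u v"
    proof
      assume "adj n k u v"
      then have "(a,y) \<in> L" "(x,b) \<in> L" using uv linext_props(5)[OF L] unfolding adj_def by auto
      moreover have "(b,a) \<in> L" "(y,x) \<in> L" using u v uv RL unfolding RL_def by auto
      ultimately have "(b,b) \<in> L" using linext_trans[OF L] by metis
      then show False using linext_props(2)[OF L] by auto
    qed
  qed
  show ?thesis unfolding maximal_independent_def
  proof (intro conjI allI impI ind)
    fix S' assume S': "R \<subseteq> S' \<and> independent n k S'"
    show "S' = R"
    proof (rule ccontr)
      assume "S' \<noteq> R"
      then obtain a b where ab: "(a,b) \<in> S'" "(a,b) \<notin> R" using S' by auto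
      have abI: "(a,b) \<in> Inc n k" using ab S' unfolding independent_def by auto
      have indS: "\<And>u v. u \<in> S' \<Longrightarrow> v \<in> S' \<Longrightarrow> \<not> adj n k u v" using S' unfolding independent_def by auto
      from Inc_mem[OF abI] have aA: "a \<in> setA n k" and bB: "b \<in> setB n k" and nab: "\<not> crown_less n k a b" by auto
      have ag: "a \<in> ground n k" and bg: "b \<in> ground n k" using aA bB setA_ground setB_ground by auto
      have aneb: "a \<noteq> b" using aA bB unfolding setA_def setB_def by auto
      have "(b,a) \<notin> L" using ab abI RL unfolding RL_def by auto
      then have abL: "(a,b) \<in> L" using linext_props(4)[OF L ag bg aneb] by auto
      define D where "D = {z. crown_less n k z b}"
      have Dg: "D \<subseteq> ground n k" unfolding D_def using L linext_props(1,5) by blast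
      have Dfin: "finite D" using finite_subset[OF Dg finite_ground] .
      have Dne: "D \<noteq> {}" using below_exists[OF _ bB] n unfolding D_def by auto
      obtain p where pD: "p \<in> D" and pmax: "\<forall>z\<in>D. z = p \<or> (z,p) \<in> L"
        using Lmax_exists[OF L Dfin Dne Dg] by auto
      have pb: "crown_less n k p b" using pD unfolding D_def by auto
      have pg: "p \<in> ground n k" using pD Dg by auto
      have bnep: "b \<noteq> p" using pb by auto
      have pA: "\<exists>i. p = EA i" using pb unfolding crown_less_def by auto
      define L1 where "L1 = move L b p"
      have L1: "linear_extension n k L1" unfolding L1_def
        by (rule linext_move[OF L bg pg bnep]) (use pmax D_def bB setB_def in auto)
      have "R \<subseteq> RL n k L1"
      proof
        fix u assume "u \<in> R"
        then obtain x y where u: "u = (x,y)" "(x,y) \<in> Inc n k" "(y,x) \<in> L" using RL unfolding RL_def by auto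
        have xb: "x \<noteq> b" using u(2) Inc_mem bB unfolding setA_def setB_def by fastforce
        have "(p,b) \<in> L" using pb linext_props(5)[OF L] by auto
        then have "(y,x) \<in> L1" using u xb linext_trans[OF L] unfolding L1_def move_iff by metis
        then show "u \<in> RL n k L1" using u unfolding RL_def by auto
      qed
      then have "RL n k L1 = R" using mx reversible_RL[OF L1] by auto
      then have "(b,a) \<notin> L1" using ab abI unfolding RL_def by auto
      moreover have "a \<noteq> p" using pb nab by auto
      ultimately have apL: "(a,p) \<in> L"
        using linext_props(4)[OF L ag pg] aneb unfolding L1_def move_iff by auto
      show False
      proof (cases "\<exists>y. crown_less n k a y \<and> (y,p) \<in> L")
        case True
        then obtain y where y: "crown_less n k a y" "(y,p) \<in> L" by auto
        have yB: "y \<in> setB n k" using y(1) unfolding crown_less_def setB_def by auto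
        obtain i where pi: "p = EA i" using pA by auto
        have pAs: "p \<in> setA n k" using pg pi unfolding ground_def setA_def setB_def by auto
        have "\<not> crown_less n k p y" using y(2) linext_props(5)[OF L] linext_asym[OF L] by blast
        then have "(p,y) \<in> Inc n k" using Inc_intro[OF pAs yB] by auto
        then have "(p,y) \<in> R" using y(2) RL unfolding RL_def by auto
        then have "(p,y) \<in> S'" using S' by auto
        moreover have "adj n k (a,b) (p,y)" unfolding adj_def using y(1) pb by auto
        ultimately show False using indS ab(1) by blast
      next
        case False
        define L2 where "L2 = move L1 a b"
        have up: "\<And>z. crown_less n k a z \<Longrightarrow> (b,z) \<in> L1"
        proof -
          fix z assume z: "crown_less n k a z"
          have zg: "z \<in> ground n k" using z linext_props(1,5)[OF L] by blast
          have "z \<noteq> p" using z pA by auto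
          then have "(p,z) \<in> L" using False z linext_props(4)[OF L pg zg] by auto
          moreover have "z \<noteq> b" using z nab by auto
          ultimately show "(b,z) \<in> L1" unfolding L1_def move_iff by auto
        qed
        have L2: "linear_extension n k L2" unfolding L2_def
          by (rule linext_move[OF L1 ag bg aneb up]) (use pA aA setA_def in auto)
        have abL1: "(a,b) \<in> L1" using apL aneb unfolding L1_def move_iff by auto
        have "insert (a,b) R \<subseteq> RL n k L2"
        proof
          fix u assume "u \<in> insert (a,b) R"
          then show "u \<in> RL n k L2"
          proof
            assume "u = (a,b)" then show ?thesis using abI aneb unfolding RL_def L2_def move_iff by auto
          next
            assume "u \<in> R"
            then have "u \<in> RL n k L1" using \<open>RL n k L1 = R\<close> by auto
            then obtain x y where u: "u = (x,y)" "(x,y) \<in> Inc n k" "(y,x) \<in> L1" unfolding RL_def by auto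
            have ya: "y \<noteq> a" using u(2) Inc_mem aA unfolding setA_def setB_def by fastforce
            have "(y,x) \<in> L2" using u ya abL1 linext_trans[OF L1] unfolding L2_def move_iff by metis
            then show ?thesis using u unfolding RL_def by auto
          qed
        qed
        then have "RL n k L2 = R" using mx reversible_RL[OF L2] by blast
        then show False using ab \<open>insert (a,b) R \<subseteq> RL n k L2\<close> by auto
      qed
    qed
  qed
qed


definition incx :: "nat \<Rightarrow> nat \<Rightarrow> nat \<Rightarrow> nat \<Rightarrow> bool" where
  "incx n k i j \<longleftrightarrow> (j + (n+k) - i) mod (n+k) \<le> k"

lemma Inc_EA_EB: "(EA i, EB j) \<in> Inc n k \<longleftrightarrow> i < n+k \<and> j < n+k \<and> incx n k i j"
  unfolding Inc_def incomparable_def setA_def setB_def incx_def crown_less_def by auto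

lemma Inc_shape: "u \<in> Inc n k \<Longrightarrow> \<exists>i j. u = (EA i, EB j)"
proof -
  assume "u \<in> Inc n k"
  then obtain a b where "u = (a,b)" "a \<in> setA n k" "b \<in> setB n k" unfolding Inc_def by auto
  moreover from this(2,3) obtain i j where "a = EA i" "b = EB j" unfolding setA_def setB_def by auto
  ultimately show ?thesis by auto
qed

lemma modN_rt:
  fixes N i j :: nat
  assumes "i < N" "j < N" shows "(i + (j + N - i) mod N) mod N = j"
proof (cases "i \<le> j")
  case True
  then have e1: "j + N - i = (j - i) + N" by auto
  have lt: "j - i < N" using assms by linarith
  have "(j + N - i) mod N = ((j - i) + N) mod N" by (simp only: e1)
  also have "\<dots> = (j - i) mod N" by (rule mod_add_self2)
  also have "\<dots> = j - i" using lt by (rule mod_less)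
  finally have "(j + N - i) mod N = j - i" .
  moreover have "i + (j - i) = j" using True by linarith
  ultimately show ?thesis using assms(2) by (simp only: mod_less)
next
  case False
  have lt: "j + N - i < N" using False assms by linarith
  have "(j + N - i) mod N = j + N - i" using lt by (rule mod_less)
  moreover have "i + (j + N - i) = j + N" using False assms by linarith
  ultimately show ?thesis using assms by (simp only: mod_add_self2 mod_less)
qed

lemma modN_dist:
  fixes N i t :: nat
  assumes "i < N" "t < N" shows "((i+t) mod N + N - i) mod N = t"
proof (cases "i + t < N")
  case True then show ?thesis using assms by simp
next
  case False
  then have "(i+t) mod N = i + t - N" using assms by (simp add: le_mod_geq)
  then have "(i+t) mod N + N - i = t" using False by simp
  then show ?thesis using assms by simp
qed

lemma modN_back:
  fixes N j t :: nat
  assumes "j < N" "1 \<le> t" "t < N" shows "(j + N - (j+t) mod N) mod N = N - t"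
proof (cases "j + t < N")
  case True then show ?thesis using assms by simp
next
  case False
  then have "(j+t) mod N = j + t - N" using assms by (simp add: le_mod_geq)
  then have "j + N - (j+t) mod N = (N - t) + N" using False assms by simp
  moreover have "((N - t) + N) mod N = (N - t) mod N" by (rule mod_add_self2)
  moreover have "N - t < N" using assms by simp
  ultimately show ?thesis by simp
qed

lemma modN_inj:
  fixes N i s t :: nat
  assumes "i < N" "s < N" "t < N" "(i+s) mod N = (i+t) mod N" shows "s = t"
  using modN_dist[OF assms(1,2)] modN_dist[OF assms(1,3)] assms(4) by metis

context
  fixes n k :: nat
  assumes n3: "3 \<le> n"
begin

lemma notinc_iff:
  assumes i: "i < n+k" and j: "j < n+k"
  shows "\<not> incx n k i j \<longleftrightarrow> (\<exists>t. 1 \<le> t \<and> t \<le> n-1 \<and> i = (j+t) mod (n+k))"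
proof
  assume ni: "\<not> incx n k i j"
  define d where "d = (j + (n+k) - i) mod (n+k)"
  have dk: "d > k" using ni unfolding incx_def d_def by auto
  have "n + k > 0" using j by auto
  then have dN: "d < n+k" unfolding d_def by auto
  have jd: "j = (i + d) mod (n+k)" unfolding d_def using modN_rt[OF i j] by simp
  have "(j + (n+k-d)) mod (n+k) = i"
  proof -
    have "(j + (n+k-d)) mod (n+k) = ((i + d) mod (n+k) + (n+k-d)) mod (n+k)" using jd by simp
    also have "\<dots> = (i + d + (n+k-d)) mod (n+k)" by (simp add: mod_add_left_eq)
    also have "i + d + (n+k-d) = i + (n+k)" using dN by simp
    finally show ?thesis using i by simp
  qed
  then show "\<exists>t. 1 \<le> t \<and> t \<le> n-1 \<and> i = (j+t) mod (n+k)"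
    using dk dN by (intro exI[of _ "n+k-d"]) auto
next
  assume "\<exists>t. 1 \<le> t \<and> t \<le> n-1 \<and> i = (j+t) mod (n+k)"
  then obtain t where t: "1 \<le> t" "t \<le> n-1" "i = (j+t) mod (n+k)" by auto
  have tN: "t < n+k" using t(2) n3 by linarith
  have "(j + (n+k) - i) mod (n+k) = n+k - t" using modN_back[OF j t(1) tN] t(3) by simp
  moreover have "n+k-t > k" using t(2) n3 by linarith
  ultimately show "\<not> incx n k i j" unfolding incx_def by linarith
qed

lemma inc_shift:
  assumes x: "x < n+k" and t: "t \<le> k" shows "incx n k x ((x+t) mod (n+k))"
proof -
  have tN: "t < n+k" using t n3 by linarith
  show ?thesis using modN_dist[OF x tN] t unfolding incx_def by simp
qed

end


definition Cs :: "nat \<Rightarrow> nat \<Rightarrow> nat set \<Rightarrow> nat set" where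
  "Cs n k Y = {j. j < n+k \<and> (\<forall>i\<in>Y. incx n k i j)}"
definition Us :: "nat \<Rightarrow> nat \<Rightarrow> nat set \<Rightarrow> nat set" where
  "Us n k Y = {i. i < n+k \<and> (\<exists>j\<in>Cs n k Y. \<not> incx n k i j)}"
definition Hs :: "nat \<Rightarrow> nat \<Rightarrow> nat set \<Rightarrow> nat set" where
  "Hs n k Y = {i. i < n+k \<and> (\<forall>j\<in>Cs n k Y. incx n k i j)}"
definition EndsN :: "nat \<Rightarrow> nat set \<Rightarrow> nat set" where
  "EndsN N X = {x\<in>X. (x+1) mod N \<notin> X}"
definition Xs :: "nat \<Rightarrow> nat set \<Rightarrow> nat \<Rightarrow> nat set" where
  "Xs N C m = {(j + t) mod N | j t. j \<in> C \<and> 1 \<le> t \<and> t \<le> m}"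

abbreviation scN :: "nat \<Rightarrow> nat \<Rightarrow> nat" where "scN N x \<equiv> (x+1) mod N"

lemma scN_inj: "inj_on (scN N) {..<N}"
proof (rule inj_onI)
  fix x y assume x: "x \<in> {..<N}" and y: "y \<in> {..<N}" and e: "(x+1) mod N = (y+1) mod N"
  show "x = y"
  proof (cases "x + 1 < N")
    case True
    show ?thesis
    proof (cases "y + 1 < N")
      case True2: True then show ?thesis using True e by simp
    next
      case False then have "y + 1 = N" using y by auto
      then show ?thesis using True e by simp
    qed
  next
    case False then have x1: "x + 1 = N" using x by auto
    show ?thesis
    proof (cases "y + 1 < N")
      case True then show ?thesis using x1 e by simp
    next
      case False then have "y + 1 = N" using y by auto
      then show ?thesis using x1 by simp
    qed
  qed
qed

lemma Xs_sub: "N > 0 \<Longrightarrow> Xs N C m \<subseteq> {..<N}"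
  unfolding Xs_def by auto

lemma Xs_1: "Xs N C 1 = scN N ` C"
  unfolding Xs_def by force

lemma Xs_Suc:
  assumes "1 \<le> m" shows "Xs N C (Suc m) = Xs N C m \<union> scN N ` Xs N C m"
proof
  show "Xs N C (Suc m) \<subseteq> Xs N C m \<union> scN N ` Xs N C m"
  proof
    fix x assume "x \<in> Xs N C (Suc m)"
    then obtain j t where x: "x = (j+t) mod N" "j \<in> C" "1 \<le> t" "t \<le> Suc m" unfolding Xs_def by auto
    show "x \<in> Xs N C m \<union> scN N ` Xs N C m"
    proof (cases "t \<le> m")
      case True then show ?thesis using x unfolding Xs_def by auto
    next
      case False
      then have t: "t = Suc m" using x by auto
      have "(j + m) mod N \<in> Xs N C m" using x assms unfolding Xs_def by auto
      moreover have "x = scN N ((j+m) mod N)" using t x by (simp add: mod_Suc_eq)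
      ultimately show ?thesis by auto
    qed
  qed
next
  show "Xs N C m \<union> scN N ` Xs N C m \<subseteq> Xs N C (Suc m)"
  proof
    fix x assume "x \<in> Xs N C m \<union> scN N ` Xs N C m"
    then show "x \<in> Xs N C (Suc m)"
    proof
      assume "x \<in> Xs N C m" then show ?thesis unfolding Xs_def by fastforce
    next
      assume "x \<in> scN N ` Xs N C m"
      then obtain j t where x: "x = scN N ((j+t) mod N)" "j \<in> C" "1 \<le> t" "t \<le> m" unfolding Xs_def by auto
      have "x = (j + Suc t) mod N" using x by (simp add: mod_Suc_eq)
      then show ?thesis using x unfolding Xs_def by fastforce
    qed
  qed
qed

lemma card_step:
  assumes X: "X \<subseteq> {..<N}"
  shows "card (X \<union> scN N ` X) = card X + card (EndsN N X)"
proof -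
  have fin: "finite X" using X finite_subset by blast
  have eq: "scN N ` X - X = scN N ` EndsN N X" unfolding EndsN_def by auto
  have "card (X \<union> scN N ` X) = card (X \<union> (scN N ` X - X))" by (metis Un_Diff_cancel)
  also have "\<dots> = card X + card (scN N ` X - X)"
    using fin by (intro card_Un_disjoint) auto
  also have "card (scN N ` X - X) = card (EndsN N X)"
    unfolding eq using scN_inj X unfolding EndsN_def
    by (intro card_image) (auto intro: inj_on_subset)
  finally show ?thesis .
qed

lemma ends_step:
  assumes X: "X \<subseteq> {..<N}"
  shows "card (EndsN N (X \<union> scN N ` X)) \<le> card (EndsN N X)"
proof -
  show ?thesis
  proof (cases "X = {}")
    case True then show ?thesis by (simp add: EndsN_def)
  next
    case False
  then have N: "N > 0" using X by auto
  have sub: "EndsN N (X \<union> scN N ` X) \<subseteq> scN N ` EndsN N X"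
  proof
    fix x assume x: "x \<in> EndsN N (X \<union> scN N ` X)"
    then have xin: "x \<in> X \<union> scN N ` X" and nx: "scN N x \<notin> X \<union> scN N ` X" unfolding EndsN_def by auto
    have xN: "x < N" using xin X N by auto
    have "x \<notin> X" using nx by auto
    then obtain y where y: "y \<in> X" "x = scN N y" using xin by auto
    then have "y \<in> EndsN N X" using \<open>x \<notin> X\<close> unfolding EndsN_def by auto
    then show "x \<in> scN N ` EndsN N X" using y by auto
  qed
  have fin: "finite (EndsN N X)" using X finite_subset unfolding EndsN_def by fastforce
  have "card (EndsN N (X \<union> scN N ` X)) \<le> card (scN N ` EndsN N X)"
    using sub fin by (intro card_mono) auto
  also have "\<dots> \<le> card (EndsN N X)" using fin by (rule card_image_le)
  finally show ?thesis .
  qed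
qed

lemma card_Xs:
  assumes C: "C \<subseteq> {..<N}" and N: "N > 0" and m: "1 \<le> m"
  shows "card (Xs N C m) \<ge> card C + (m-1) * card (EndsN N (Xs N C m))"
  using m
proof (induction m rule: dec_induct)
  case base
  have "card (Xs N C 1) = card C" unfolding Xs_1 using scN_inj C by (intro card_image) (auto intro: inj_on_subset)
  then show ?case by simp
next
  case (step m)
  have X: "Xs N C m \<subseteq> {..<N}" using Xs_sub N by auto
  have "card (Xs N C (Suc m)) = card (Xs N C m) + card (EndsN N (Xs N C m))"
    unfolding Xs_Suc[OF step(1)] using card_step[OF X] .
  moreover have "card (EndsN N (Xs N C (Suc m))) \<le> card (EndsN N (Xs N C m))"
    unfolding Xs_Suc[OF step(1)] using ends_step[OF X] .
  moreover have "(m-1) * card (EndsN N (Xs N C (Suc m))) \<le> (m-1) * card (EndsN N (Xs N C m))"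
    using calculation(2) by (rule mult_le_mono2)
  ultimately have "card (Xs N C (Suc m)) \<ge> card C + (m-1) * card (EndsN N (Xs N C (Suc m))) + card (EndsN N (Xs N C (Suc m)))"
    using step(3) by linarith
  moreover have "(m-1) * e + e = (Suc m - 1) * e" for e using step(1)
    by (metis Suc_diff_le add.commute diff_Suc_1 mult_Suc)
  ultimately show ?case by (metis add.assoc)
qed

lemma ends_empty:
  assumes X: "X \<subseteq> {..<N}" and E: "EndsN N X = {}" and x: "x \<in> X"
  shows "X = {..<N}"
proof -
  have all: "(x + t) mod N \<in> X" for t
  proof (induction t)
    case 0 then show ?case using x X by auto
  next
    case (Suc t)
    then have "((x+t) mod N + 1) mod N \<in> X" using E unfolding EndsN_def by auto
    then show ?case by (simp add: mod_Suc_eq)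
  qed
  have xN: "x < N" using x X by auto
  show ?thesis
  proof
    show "{..<N} \<subseteq> X"
    proof
      fix y assume "y \<in> {..<N}"
      then have "y = (x + (y + N - x) mod N) mod N" using modN_rt[OF xN] by auto
      then show "y \<in> X" using all by metis
    qed
  qed (use X in auto)
qed

lemma walk:
  assumes "(x::nat) \<in> X" "(x + d) mod N \<notin> X" "x < N"
  shows "\<exists>d'<d. (x + d') mod N \<in> EndsN N X"
  using assms(2)
proof (induction d)
  case 0
  then show ?case using assms(1,3) by auto
next
  case (Suc d)
  show ?case
  proof (cases "(x + d) mod N \<in> X")
    case True
    then have "(x+d) mod N \<in> EndsN N X" using Suc.prems unfolding EndsN_def by (simp add: mod_Suc_eq)
    then show ?thesis by auto
  next
    case False
    then show ?thesis using Suc.IH by (meson less_Suc_eq)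
  qed
qed


definition bad :: "nat \<Rightarrow> nat \<Rightarrow> nat set \<Rightarrow> bool" where
  "bad n k Y \<longleftrightarrow> Cs n k Y \<noteq> {} \<and> 2 \<le> card (EndsN (n+k) (Us n k Y))"

lemma Cs_sub: "Cs n k Y \<subseteq> {..<n+k}" unfolding Cs_def by auto
lemma Us_sub: "Us n k Y \<subseteq> {..<n+k}" unfolding Us_def by auto
lemma Cs_anti: "Y \<subseteq> Y' \<Longrightarrow> Cs n k Y' \<subseteq> Cs n k Y" unfolding Cs_def by auto
lemma finite_Cs: "finite (Cs n k Y)" by (rule finite_subset[OF Cs_sub]) simp
lemma finite_Us: "finite (Us n k Y)" by (rule finite_subset[OF Us_sub]) simp
lemma Hs_eq: "Hs n k Y = {..<n+k} - Us n k Y" unfolding Hs_def Us_def by auto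
lemma Y_Hs: "Y \<subseteq> {..<n+k} \<Longrightarrow> Y \<subseteq> Hs n k Y" unfolding Hs_def Cs_def by auto
lemma Y_Us: "Y \<subseteq> {..<n+k} \<Longrightarrow> Y \<inter> Us n k Y = {}"
  unfolding Us_def Cs_def by auto
lemma Hs_anti_C: "Cs n k Y' \<subseteq> Cs n k Y \<Longrightarrow> Hs n k Y \<subseteq> Hs n k Y'" unfolding Hs_def by auto
lemma Hs_inc: "i \<in> Hs n k Y \<Longrightarrow> j \<in> Cs n k Y \<Longrightarrow> incx n k i j" unfolding Hs_def by auto
lemma Cs_Hs: "Y \<subseteq> {..<n+k} \<Longrightarrow> Cs n k (Hs n k Y) = Cs n k Y"
proof
  assume "Y \<subseteq> {..<n+k}"
  then show "Cs n k (Hs n k Y) \<subseteq> Cs n k Y" by (intro Cs_anti Y_Hs)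
qed (auto simp: Cs_def Hs_def)

context
  fixes n k :: nat
  assumes n3: "3 \<le> n"
begin

lemma Us_eq: "Us n k Y = Xs (n+k) (Cs n k Y) (n-1)"
proof
  show "Us n k Y \<subseteq> Xs (n+k) (Cs n k Y) (n-1)"
  proof
    fix i assume "i \<in> Us n k Y"
    then obtain j where i: "i < n+k" "j \<in> Cs n k Y" "\<not> incx n k i j" unfolding Us_def by auto
    have j: "j < n+k" using i(2) Cs_sub by auto
    obtain t where "1 \<le> t" "t \<le> n-1" "i = (j+t) mod (n+k)" using notinc_iff[OF n3 i(1) j] i(3) by auto
    then show "i \<in> Xs (n+k) (Cs n k Y) (n-1)" using i(2) unfolding Xs_def by auto
  qed
next
  show "Xs (n+k) (Cs n k Y) (n-1) \<subseteq> Us n k Y"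
  proof
    fix i assume "i \<in> Xs (n+k) (Cs n k Y) (n-1)"
    then obtain j t where it: "i = (j+t) mod (n+k)" "j \<in> Cs n k Y" "1 \<le> t" "t \<le> n-1" unfolding Xs_def by auto
    have j: "j < n+k" using it(2) Cs_sub by auto
    have i: "i < n+k" using it(1) n3 by auto
    have "\<not> incx n k i j" using notinc_iff[OF n3 i j] it by auto
    then show "i \<in> Us n k Y" using i it(2) unfolding Us_def by auto
  qed
qed

lemma card_U:
  "card (Us n k Y) \<ge> card (Cs n k Y) + (n-2) * card (EndsN (n+k) (Us n k Y))"
proof -
  have "card (Xs (n+k) (Cs n k Y) (n-1)) \<ge> card (Cs n k Y) + (n-1-1) * card (EndsN (n+k) (Xs (n+k) (Cs n k Y) (n-1)))"
    using n3 by (intro card_Xs Cs_sub) auto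
  then show ?thesis unfolding Us_eq by (simp add: numeral_2_eq_2)
qed

lemma Us_ne: "Cs n k Y \<noteq> {} \<Longrightarrow> Us n k Y \<noteq> {}"
proof -
  assume "Cs n k Y \<noteq> {}"
  then obtain j where j: "j \<in> Cs n k Y" by auto
  then have "(j+1) mod (n+k) \<in> Xs (n+k) (Cs n k Y) (n-1)" using n3 unfolding Xs_def by fastforce
  then show ?thesis unfolding Us_eq by auto
qed

lemma card_UY:
  assumes Y: "Y \<subseteq> {..<n+k}"
  shows "card (Us n k Y) + card Y \<le> n+k"
proof -
  have "card (Us n k Y \<union> Y) = card (Us n k Y) + card Y"
    using Y_Us[OF Y] finite_Us finite_subset[OF Y] by (intro card_Un_disjoint) auto
  moreover have "card (Us n k Y \<union> Y) \<le> card {..<n+k}" using Us_sub Y by (intro card_mono) auto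
  ultimately show ?thesis by simp
qed

lemma Ca:
  assumes Y: "Y \<subseteq> {..<n+k}" "Y \<noteq> {}" and C: "Cs n k Y \<noteq> {}"
  shows "card (Cs n k Y) + card Y \<le> k+2"
proof -
  have "EndsN (n+k) (Us n k Y) \<noteq> {}"
  proof
    assume E: "EndsN (n+k) (Us n k Y) = {}"
    obtain x where x: "x \<in> Us n k Y" using Us_ne[OF C] by auto
    have "Us n k Y = {..<n+k}" using ends_empty[OF Us_sub E x] .
    then show False using Y_Us[OF Y(1)] Y(1) Y(2) by auto
  qed
  moreover have "finite (EndsN (n+k) (Us n k Y))"
    by (rule finite_subset[OF _ finite_Us]) (auto simp: EndsN_def)
  ultimately have "card (EndsN (n+k) (Us n k Y)) \<ge> 1"
    by (simp add: Suc_leI card_gt_0_iff)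
  then have "(n-2) * card (EndsN (n+k) (Us n k Y)) \<ge> n-2" by simp
  then show ?thesis using card_U[of Y] card_UY[OF Y(1)] n3 by linarith
qed

lemma Cb:
  assumes Y: "Y \<subseteq> {..<n+k}" and B: "bad n k Y"
  shows "card (Cs n k Y) + card Y + n \<le> k+4" "card (Cs n k Y) \<ge> 2"
proof -
  have C: "Cs n k Y \<noteq> {}" and E: "card (EndsN (n+k) (Us n k Y)) \<ge> 2" using B unfolding bad_def by auto
  have "(n-2) * card (EndsN (n+k) (Us n k Y)) \<ge> (n-2) * 2" using E by (rule mult_le_mono2)
  then have U: "card (Us n k Y) \<ge> card (Cs n k Y) + 2*(n-2)" using card_U[of Y] by linarith
  then show "card (Cs n k Y) + card Y + n \<le> k+4" using card_UY[OF Y] n3 by linarith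
  show "card (Cs n k Y) \<ge> 2"
  proof (rule ccontr)
    assume "\<not> card (Cs n k Y) \<ge> 2"
    moreover have "card (Cs n k Y) \<noteq> 0" using C finite_Cs by auto
    ultimately have "card (Cs n k Y) = 1" by linarith
    then obtain j where j: "Cs n k Y = {j}" using card_1_singletonE by blast
    have "Us n k Y = (\<lambda>t. (j+t) mod (n+k)) ` {1..n-1}" unfolding Us_eq j Xs_def by auto
    then have "card (Us n k Y) \<le> n-1" using card_image_le[of "{1..n-1}"] by auto
    then show False using U \<open>card (Cs n k Y) = 1\<close> n3 by linarith
  qed
qed

lemma Cs1:
  assumes x: "x < n+k" shows "card (Cs n k {x}) \<ge> k+1"
proof -
  have N: "n+k > 0" using n3 by auto
  have "(\<lambda>t. (x+t) mod (n+k)) ` {..k} \<subseteq> Cs n k {x}"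
    using inc_shift[OF n3 x] N unfolding Cs_def by auto
  moreover have "inj_on (\<lambda>t. (x+t) mod (n+k)) {..k}"
  proof (rule inj_onI)
    fix s t assume "s \<in> {..k}" "t \<in> {..k}" "(x+s) mod (n+k) = (x+t) mod (n+k)"
    moreover have "s < n+k" "t < n+k" using calculation n3 by auto
    ultimately show "s = t" using modN_inj[OF x] by blast
  qed
  ultimately have "card {..k} \<le> card (Cs n k {x})"
    using finite_Cs by (metis card_image card_mono)
  then show ?thesis by simp
qed

lemma not_bad1:
  assumes x: "x < n+k" shows "\<not> bad n k {x}"
proof
  assume "bad n k {x}"
  then have "card (Cs n k {x}) + card {x} + n \<le> k+4" using Cb(1)[of "{x}"] x by auto
  then show False using Cs1[OF x] n3 by simp
qed

end


lemma gauss_nat: "2 * (\<Sum>s<m. (m - s)) = m * (m + 1::nat)"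
proof (induction m)
  case 0 then show ?case by simp
next
  case (Suc m)
  have "(\<Sum>s<Suc m. (Suc m - s)) = (\<Sum>s<m. (Suc m - s)) + 1" by simp
  also have "(\<Sum>s<m. (Suc m - s)) = (\<Sum>s<m. (m - s) + 1)"
    by (rule sum.cong) auto
  also have "\<dots> = (\<Sum>s<m. (m - s)) + m" unfolding sum.distrib by simp
  finally show ?case using Suc.IH by (simp add: algebra_simps)
qed

lemma gauss_tri: "2 * (\<Sum>t\<in>{1..K+1}. (K + 2 - t)) = (K+1) * (K+2::nat)"
proof -
  have "(\<Sum>t\<in>{1..K+1}. (K + 2 - t)) = (\<Sum>s<K+1. (K + 1 - s))"
  proof (rule sum.reindex_bij_witness[of _ "\<lambda>s. s + 1" "\<lambda>t. t - 1"]) qed auto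
  then show ?thesis using gauss_nat[of "K+1"] by simp
qed

lemma sum_bound:
  fixes c :: "nat \<Rightarrow> nat" and K n i :: nat
  assumes n3: "3 \<le> n" and i2: "1 \<le> i" and ci: "c i + i + n \<le> K + 4"
    and dec: "c (Suc i) < c i" and anti: "\<And>t. Suc i \<le> t \<Longrightarrow> c t \<le> c (Suc i)"
    and cap: "\<And>t. t \<in> {1..K+1} \<Longrightarrow> c t + t \<le> K + 2"
  shows "2 * (\<Sum>t\<in>{1..K+1}. c t) + n * (n - 1) \<le> (K+1) * (K+2) + 2"
proof -
  define e where "e t = (K + 2 - t) - c t" for t
  have ce: "t \<in> {1..K+1} \<Longrightarrow> c t + e t = K + 2 - t" for t using cap[of t] unfolding e_def by auto
  have sumeq: "(\<Sum>t\<in>{1..K+1}. c t) + (\<Sum>t\<in>{1..K+1}. e t) = (\<Sum>t\<in>{1..K+1}. (K + 2 - t))"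
  proof -
    have "(\<Sum>t\<in>{1..K+1}. c t) + (\<Sum>t\<in>{1..K+1}. e t) = (\<Sum>t\<in>{1..K+1}. c t + e t)"
      by (simp only: sum.distrib)
    also have "\<dots> = (\<Sum>t\<in>{1..K+1}. (K + 2 - t))" by (rule sum.cong) (auto simp: ce)
    finally show ?thesis .
  qed
  have range: "i + n - 2 \<le> K + 1" using ci dec by linarith
  define J where "J = insert i ((\<lambda>s. i + 1 + s) ` {..<n-2})"
  have Jsub: "J \<subseteq> {1..K+1}" unfolding J_def using i2 range n3 by auto
  have "(\<Sum>t\<in>J. e t) \<le> (\<Sum>t\<in>{1..K+1}. e t)" using Jsub by (intro sum_mono2) auto
  moreover have "(\<Sum>t\<in>J. e t) = e i + (\<Sum>s<n-2. e (i + 1 + s))"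
    unfolding J_def by (subst sum.insert) (auto simp: sum.reindex inj_on_def)
  moreover have "e i \<ge> n - 2" unfolding e_def using ci by linarith
  moreover have "(\<Sum>s<n-2. e (i + 1 + s)) \<ge> (\<Sum>s<n-2. (n - 2 - s))"
  proof (rule sum_mono)
    fix s assume "s \<in> {..<n-2}"
    have "c (i+1+s) \<le> c (Suc i)" using anti by auto
    then show "n - 2 - s \<le> e (i+1+s)" unfolding e_def using ci dec by linarith
  qed
  ultimately have "(\<Sum>t\<in>{1..K+1}. e t) \<ge> (n - 2) + (\<Sum>s<n-2. (n - 2 - s))" by linarith
  moreover have "2 * (\<Sum>s<n-2. (n - 2 - s)) = (n-2) * (n-1)"
  proof -
    have "n - 2 + 1 = n - 1" using n3 by linarith
    then show ?thesis using gauss_nat[of "n-2"] by metis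
  qed
  moreover have "(n-2) * (n-1) + 2 * (n-2) + 2 = n * (n - 1)" using n3
  proof -
    obtain m where m: "n = m + 3" using n3 by (metis add.commute le_Suc_ex)
    show ?thesis unfolding m by (simp add: algebra_simps)
  qed
  ultimately show ?thesis using sumeq gauss_tri[of K] by linarith
qed

definition Ys :: "nat \<Rightarrow> (nat \<Rightarrow> nat) \<Rightarrow> nat \<Rightarrow> nat set" where
  "Ys N r t = {x. x < N \<and> r x < t}"

definition Tr :: "nat \<Rightarrow> nat \<Rightarrow> (nat \<Rightarrow> nat) \<Rightarrow> (elt \<times> elt) set" where
  "Tr n k r = {(EA x, EB j) | x j. x < n+k \<and> j \<in> Cs n k (Ys (n+k) r (Suc (r x)))}"

lemma Ys_sub: "Ys N r t \<subseteq> {..<N}" unfolding Ys_def by auto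
lemma Ys_mono: "t \<le> t' \<Longrightarrow> Ys N r t \<subseteq> Ys N r t'" unfolding Ys_def by auto

lemma card_Ys:
  assumes r: "bij_betw r {..<N} {..<N}" and t: "t \<le> N"
  shows "card (Ys N r t) = t"
proof -
  have inj: "inj_on r (Ys N r t)" using r Ys_sub unfolding bij_betw_def by (meson inj_on_subset)
  have "r ` Ys N r t = {..<t}"
  proof
    show "r ` Ys N r t \<subseteq> {..<t}" unfolding Ys_def by auto
    show "{..<t} \<subseteq> r ` Ys N r t"
    proof
      fix y assume y: "y \<in> {..<t}"
      then have "y \<in> r ` {..<N}" using r t unfolding bij_betw_def by auto
      then obtain x where "x < N" "y = r x" by auto
      then show "y \<in> r ` Ys N r t" using y unfolding Ys_def by auto
    qed
  qed
  then show ?thesis using card_image[OF inj] by simp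
qed

lemma card_Tr:
  assumes r: "bij_betw r {..<n+k} {..<n+k}"
  shows "card (Tr n k r) = (\<Sum>t<n+k. card (Cs n k (Ys (n+k) r (Suc t))))"
proof -
  define f where "f = (\<lambda>(x,j). (EA x, EB j))"
  have "Tr n k r = f ` (SIGMA x:{..<n+k}. Cs n k (Ys (n+k) r (Suc (r x))))"
    unfolding Tr_def f_def by auto
  moreover have "inj f" unfolding f_def inj_def by auto
  ultimately have "card (Tr n k r) = card (SIGMA x:{..<n+k}. Cs n k (Ys (n+k) r (Suc (r x))))"
    by (simp add: card_image inj_on_subset)
  also have "\<dots> = (\<Sum>x<n+k. card (Cs n k (Ys (n+k) r (Suc (r x)))))"
    by (rule card_SigmaI) (auto simp: finite_Cs)
  also have "\<dots> = (\<Sum>t<n+k. card (Cs n k (Ys (n+k) r (Suc t))))"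
    using sum.reindex_bij_betw[OF r, of "\<lambda>t. card (Cs n k (Ys (n+k) r (Suc t)))"] by simp
  finally show ?thesis .
qed

lemma bad_eqC: "Cs n k Y = Cs n k Y' \<Longrightarrow> bad n k Y = bad n k Y'"
  unfolding bad_def Us_def by simp

theorem bound_main:
  assumes n3: "3 \<le> n" and r: "bij_betw r {..<n+k} {..<n+k}"
    and ex: "\<exists>t\<in>{1..n+k}. bad n k (Ys (n+k) r t)"
  shows "n \<le> k \<and> 2 * card (Tr n k r) + n * (n - 1) \<le> (k+1) * (k+2) + 2"
proof -
  let ?N = "n+k"
  define c where "c t = card (Cs n k (Ys ?N r t))" for t
  define B where "B = {t\<in>{1..?N}. bad n k (Ys ?N r t)}"
  have Bfin: "finite B" and Bne: "B \<noteq> {}" using ex unfolding B_def by auto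
  define i where "i = Max B"
  have iB: "i \<in> B" unfolding i_def using Bfin Bne by (rule Max_in)
  have imax: "\<And>t. t \<in> B \<Longrightarrow> t \<le> i" unfolding i_def using Bfin by auto
  have i1: "1 \<le> i" and iN: "i \<le> ?N" and ibad: "bad n k (Ys ?N r i)" using iB unfolding B_def by auto
  have cardYi: "card (Ys ?N r i) = i" using card_Ys[OF r iN] .
  have Cb1: "c i + i + n \<le> k + 4" and Cb2: "c i \<ge> 2"
    using Cb[OF n3 Ys_sub ibad] cardYi unfolding c_def by auto
  have i2: "i \<noteq> 1"
  proof
    assume "i = 1"
    then have "card (Ys ?N r 1) = 1" using cardYi by simp
    then obtain x where x: "Ys ?N r 1 = {x}" by (rule card_1_singletonE)
    then have "x < ?N" using Ys_sub[of ?N r 1] by auto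
    then show False using not_bad1[OF n3] ibad x \<open>i = 1\<close> by auto
  qed
  then have "2 \<le> i" using i1 by auto
  then have nk: "n \<le> k" using Cb1 Cb2 by linarith
  have iN1: "Suc i \<le> ?N" using Cb1 Cb2 n3 by linarith
  have nb: "\<not> bad n k (Ys ?N r (Suc i))"
  proof
    assume "bad n k (Ys ?N r (Suc i))"
    then have "Suc i \<in> B" unfolding B_def using iN1 by auto
    then show False using imax by fastforce
  qed
  have sub: "Cs n k (Ys ?N r (Suc i)) \<subseteq> Cs n k (Ys ?N r i)" by (intro Cs_anti Ys_mono) auto
  have dec: "c (Suc i) < c i"
  proof (rule ccontr)
    assume "\<not> c (Suc i) < c i"
    then have "card (Cs n k (Ys ?N r i)) \<le> card (Cs n k (Ys ?N r (Suc i)))" unfolding c_def by auto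
    then have "Cs n k (Ys ?N r (Suc i)) = Cs n k (Ys ?N r i)" using sub finite_Cs by (metis card_seteq)
    then show False using nb ibad bad_eqC by metis
  qed
  have anti: "\<And>t. Suc i \<le> t \<Longrightarrow> c t \<le> c (Suc i)"
    unfolding c_def by (intro card_mono finite_Cs Cs_anti Ys_mono)
  have capz: "c t + t \<le> k + 2 \<or> c t = 0" if t: "t \<in> {1..?N}" for t
  proof (cases "Cs n k (Ys ?N r t) = {}")
    case True
    then show ?thesis unfolding c_def by simp
  next
    case False
    have "card (Ys ?N r t) = t" using card_Ys[OF r] t by auto
    then have "Ys ?N r t \<noteq> {}" using t by auto
    then show ?thesis using Ca[OF n3 Ys_sub _ False] \<open>card (Ys ?N r t) = t\<close> unfolding c_def by auto
  qed
  have cap: "c t + t \<le> k + 2" if t: "t \<in> {1..k+1}" for t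
    using capz[of t] t n3 by fastforce
  have zero: "c t = 0" if t: "t \<in> {k+2..?N}" for t
  proof (rule ccontr)
    assume "c t \<noteq> 0"
    then have "c t + t \<le> k + 2" using capz[of t] t by auto
    then show False using \<open>c t \<noteq> 0\<close> t by auto
  qed
  have "card (Tr n k r) = (\<Sum>t<?N. c (Suc t))" unfolding c_def by (rule card_Tr[OF r])
  also have "\<dots> = (\<Sum>t\<in>{1..?N}. c t)"
  proof (rule sum.reindex_bij_witness[of _ "\<lambda>t. t - 1" "\<lambda>s. Suc s"]) qed auto
  also have "{1..?N} = {1..k+1} \<union> {k+2..?N}" using n3 by auto
  also have "(\<Sum>t\<in>{1..k+1} \<union> {k+2..?N}. c t) = (\<Sum>t\<in>{1..k+1}. c t) + (\<Sum>t\<in>{k+2..?N}. c t)"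
    by (rule sum.union_disjoint) auto
  also have "(\<Sum>t\<in>{k+2..?N}. c t) = 0" using zero by simp
  finally have "card (Tr n k r) = (\<Sum>t\<in>{1..k+1}. c t)" by simp
  moreover have "2 * (\<Sum>t\<in>{1..k+1}. c t) + n * (n - 1) \<le> (k+1) * (k+2) + 2"
    by (rule sum_bound[OF n3 i1 Cb1 dec anti cap]) auto
  ultimately show ?thesis using nk by simp
qed


lemma sorted_key_mono:
  assumes "sorted (map f xs)" "i' \<le> i" "i < length xs"
  shows "f (xs ! i') \<le> f (xs ! i)"
  using assms sorted_nth_mono[of "map f xs" i' i] by auto

lemma star_interval:
  fixes D :: "nat set"
  assumes fin: "finite D" and ne: "D \<noteq> {}"
    and star: "\<And>u u'. u \<in> D \<Longrightarrow> (g \<le> u' \<and> u' \<le> u) \<or> (u \<le> u' \<and> u' \<le> g) \<Longrightarrow> u' \<in> D"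
  shows "D = {Min D..Max D}"
proof
  show "D \<subseteq> {Min D..Max D}" using fin by auto
  show "{Min D..Max D} \<subseteq> D"
  proof
    fix u' assume u': "u' \<in> {Min D..Max D}"
    have mi: "Min D \<in> D" and ma: "Max D \<in> D" using fin ne by auto
    show "u' \<in> D"
    proof (cases "g \<le> u'")
      case True then show ?thesis using star[OF ma] u' by auto
    next
      case False then show ?thesis using star[OF mi] u' by auto
    qed
  qed
qed

lemma abstract_order:
  fixes k g :: nat and S :: "nat set" and P :: "nat \<Rightarrow> nat set"
  assumes gk: "g \<le> k" and finS: "finite S"
    and Psub: "\<And>t. t \<in> S \<Longrightarrow> P t \<subseteq> {..k}"
    and gP: "\<And>t. t \<in> S \<Longrightarrow> g \<in> P t"
    and conv: "\<And>t u1 u2 u3. t \<in> S \<Longrightarrow> u1 \<le> u2 \<Longrightarrow> u2 \<le> u3 \<Longrightarrow> u1 \<in> P t \<Longrightarrow> u3 \<in> P t \<Longrightarrow> u2 \<in> P t"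
    and nest: "\<And>t t'. t \<in> S \<Longrightarrow> t' \<in> S \<Longrightarrow> t \<le> t' \<Longrightarrow> P t \<subseteq> P t'"
  shows "\<exists>xs. distinct xs \<and> set xs = {..k} \<and> length xs = k+1
     \<and> (\<forall>i \<le> k+1. set (take i xs) = {} \<or> (\<exists>a b. a \<le> b \<and> b \<le> k \<and> set (take i xs) = {a..b}))
     \<and> (\<forall>t\<in>S. \<forall>i<k+1. \<forall>i'\<le>i. xs ! i \<in> P t \<longrightarrow> xs ! i' \<in> P t)"
proof -
  define e where "e u = card {t\<in>S. u \<notin> P t}" for u
  define M where "M = 2*k + 3"
  define dist where "dist u = (if g \<le> u then u - g else g - u)" for u :: nat
  define key where "key u = e u * M + 2 * dist u + (if u < g then 1 else 0)" for u
  have low: "2 * dist u + (if u < g then 1 else 0) < M" if "u \<le> k" for u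
    using that gk unfolding dist_def M_def by auto
  have key_div: "key u div M = e u" if "u \<le> k" for u
  proof -
    let ?r = "2 * dist u + (if u < g then 1 else 0)"
    have "key u = ?r + e u * M" unfolding key_def by simp
    moreover have "M \<noteq> 0" unfolding M_def by simp
    ultimately have "key u div M = e u + ?r div M" by simp
    then show ?thesis using low[OF that] by simp
  qed
  have key_mod: "key u mod M = 2 * dist u + (if u < g then 1 else 0)" if "u \<le> k" for u
  proof -
    let ?r = "2 * dist u + (if u < g then 1 else 0)"
    have "key u = ?r + e u * M" unfolding key_def by simp
    then have "key u mod M = ?r mod M" by simp
    then show ?thesis using low[OF that] by simp
  qed
  have key_inj: "u = v" if "u \<le> k" "v \<le> k" "key u = key v" for u v
  proof -
    have "2 * dist u + (if u < g then 1 else 0) = 2 * dist v + (if v < g then 1 else 0)"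
      using key_mod[OF that(1)] key_mod[OF that(2)] that(3) by simp
    then have "dist u = dist v" "(u < g) = (v < g)" by (auto split: if_splits) presburger+
    then show "u = v" unfolding dist_def by (auto split: if_splits)
  qed
  have e_le: "e u' \<le> e u" if "(g \<le> u' \<and> u' \<le> u) \<or> (u \<le> u' \<and> u' \<le> g)" for u u'
  proof -
    have "{t\<in>S. u' \<notin> P t} \<subseteq> {t\<in>S. u \<notin> P t}"
    proof
      fix t assume t: "t \<in> {t\<in>S. u' \<notin> P t}"
      show "t \<in> {t\<in>S. u \<notin> P t}"
      proof (rule ccontr)
        assume "t \<notin> {t\<in>S. u \<notin> P t}"
        then have "u \<in> P t" using t by auto
        then have "u' \<in> P t" using that conv[of t] gP[of t] t by blast
        then show False using t by auto
      qed
    qed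
    then show ?thesis unfolding e_def using finS by (intro card_mono) auto
  qed
  have key_star: "key u' \<le> key u" if "(g \<le> u' \<and> u' \<le> u) \<or> (u \<le> u' \<and> u' \<le> g)" for u u'
  proof -
    have "e u' * M \<le> e u * M" using e_le[OF that] by simp
    moreover have "2 * dist u' + (if u' < g then 1 else 0) \<le> 2 * dist u + (if u < g then 1 else 0)"
      using that unfolding dist_def by auto
    ultimately show ?thesis unfolding key_def by linarith
  qed
  have key_down: "u' \<in> P t" if "t \<in> S" "u \<in> P t" "key u' \<le> key u" "u \<le> k" "u' \<le> k" for t u u'
  proof (rule ccontr)
    assume nu': "u' \<notin> P t"
    have "e u' \<le> e u" using that(3) key_div[OF that(4)] key_div[OF that(5)] by (metis div_le_mono)
    moreover have "{t\<in>S. u \<notin> P t} \<subset> {t\<in>S. u' \<notin> P t}"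
    proof
      show "{t\<in>S. u \<notin> P t} \<subseteq> {t\<in>S. u' \<notin> P t}"
      proof
        fix t' assume t': "t' \<in> {t\<in>S. u \<notin> P t}"
        have "\<not> t \<le> t'" using nest[OF that(1), of t'] t' that(2) by auto
        then have "P t' \<subseteq> P t" using nest[of t' t] t' that(1) by auto
        then show "t' \<in> {t\<in>S. u' \<notin> P t}" using t' nu' by auto
      qed
      show "{t\<in>S. u \<notin> P t} \<noteq> {t\<in>S. u' \<notin> P t}" using that(1,2) nu' by auto
    qed
    then have "e u < e u'" unfolding e_def using finS by (intro psubset_card_mono) auto
    ultimately show False by simp
  qed
  define xs where "xs = sort_key key [0..<k+1]"
  have dxs: "distinct xs" unfolding xs_def by simp
  have sxs: "set xs = {..k}" unfolding xs_def by auto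
  have lxs: "length xs = k+1" unfolding xs_def by simp
  have sorted: "sorted (map key xs)" unfolding xs_def by simp
  have xs_le: "xs ! i \<le> k" if "i < k+1" for i using nth_mem[of i xs] that sxs lxs by auto
  have kmono: "key (xs ! i') \<le> key (xs ! i)" if "i' \<le> i" "i < k+1" for i i'
    using sorted_key_mono[OF sorted that(1)] that(2) lxs by auto
  have star_take: "u' \<in> set (take i xs)" if i: "i \<le> k+1" and u: "u \<in> set (take i xs)"
    and b: "(g \<le> u' \<and> u' \<le> u) \<or> (u \<le> u' \<and> u' \<le> g)" for i u u'
  proof -
    obtain a where a: "a < i" "xs ! a = u" using u i lxs by (auto simp: in_set_conv_nth)
    have uk: "u \<le> k" using a xs_le i by auto
    have u'k: "u' \<le> k" using b uk gk by auto
    then obtain a' where a': "a' < k+1" "xs ! a' = u'" using sxs lxs by (metis atMost_iff in_set_conv_nth)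
    have ks: "key u' \<le> key u" using key_star[OF b] .
    show ?thesis
    proof (cases "a' < i")
      case True then show ?thesis using a' i lxs by (auto simp: in_set_conv_nth)
    next
      case False
      then have "key u \<le> key u'" using kmono[of a a'] a a' by auto
      then have "u = u'" using key_inj[OF uk u'k] ks by auto
      then show ?thesis using u by simp
    qed
  qed
  have intv: "set (take i xs) = {} \<or> (\<exists>a b. a \<le> b \<and> b \<le> k \<and> set (take i xs) = {a..b})"
    if i: "i \<le> k+1" for i
  proof (cases "set (take i xs) = {}")
    case False
    let ?D = "set (take i xs)"
    have "?D = {Min ?D..Max ?D}"
      by (rule star_interval[OF _ False, of g]) (use star_take[OF i] in auto)
    moreover have "Max ?D \<le> k" using False sxs by (auto dest: in_set_takeD)
    moreover have "Min ?D \<le> Max ?D" using False by auto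
    ultimately show ?thesis by blast
  qed simp
  have down: "xs ! i' \<in> P t" if "t \<in> S" "i < k+1" "i' \<le> i" "xs ! i \<in> P t" for t i i'
    using key_down[OF that(1) that(4) kmono[OF that(3) that(2)]] xs_le that by auto
  show ?thesis using dxs sxs lxs intv down by blast
qed


lemma modN_inv:
  fixes N i d j :: nat
  assumes i: "i < N" and d: "d \<le> N" and j: "(i + d) mod N = j"
  shows "(j + (N - d)) mod N = i"
proof -
  have "(j + (N - d)) mod N = ((i + d) mod N + (N - d)) mod N" using j by simp
  also have "\<dots> = (i + d + (N - d)) mod N" by (simp add: mod_add_left_eq)
  also have "i + d + (N - d) = i + N" using d by simp
  finally show ?thesis using i by simp
qed

lemma Tcol_eq: "Tcol n k \<sigma> i = {b. \<forall>t\<le>i. (\<sigma> ! t, b) \<in> Inc n k}"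
proof (induction i)
  case 0 then show ?case by auto
next
  case (Suc i)
  show ?case
  proof
    show "Tcol n k \<sigma> (Suc i) \<subseteq> {b. \<forall>t\<le>Suc i. (\<sigma> ! t, b) \<in> Inc n k}"
      using Suc by (auto simp: le_Suc_eq)
    show "{b. \<forall>t\<le>Suc i. (\<sigma> ! t, b) \<in> Inc n k} \<subseteq> Tcol n k \<sigma> (Suc i)"
      using Suc by auto
  qed
qed

context
  fixes n k :: nat and r :: "nat \<Rightarrow> nat"
  assumes n3: "3 \<le> n" and r: "bij_betw r {..<n+k} {..<n+k}"
    and good: "\<And>t. t \<in> {1..n+k} \<Longrightarrow> \<not> bad n k (Ys (n+k) r t)"
begin

abbreviation "Y t \<equiv> Ys (n+k) r t"

definition SS where "SS = {t \<in> {1..n+k}. Cs n k (Y t) \<noteq> {}}"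
definition tm where "tm = Max SS"
definition jst where "jst = (SOME j. j \<in> Cs n k (Y tm))"
definition s0 where "s0 = (jst + n) mod (n+k)"
definition phi where "phi u = (s0 + u) mod (n+k)"
definition PP where "PP t = {u. u \<le> k \<and> phi u \<in> Hs n k (Y t)}"

lemma NN_pos: "n + k > 0" using n3 by auto

lemma card_Y: "t \<le> n+k \<Longrightarrow> card (Y t) = t" using card_Ys[OF r] by auto

lemma Y1: "\<exists>x0. x0 < n+k \<and> Y 1 = {x0}"
proof -
  have "card (Y 1) = 1" using card_Y n3 by auto
  then obtain x0 where "Y 1 = {x0}" by (rule card_1_singletonE)
  then show ?thesis using Ys_sub[of "n+k" r 1] by auto
qed

lemma SS1: "1 \<in> SS"
proof -
  obtain x0 where x0: "x0 < n+k" "Y 1 = {x0}" using Y1 by auto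
  have "card (Cs n k {x0}) \<ge> k+1" using Cs1[OF n3 x0(1)] .
  then have "Cs n k {x0} \<noteq> {}" by auto
  then show ?thesis unfolding SS_def using x0 n3 by auto
qed

lemma SS_fin: "finite SS" unfolding SS_def by auto

lemma tm: "tm \<in> SS" "\<And>t. t \<in> SS \<Longrightarrow> t \<le> tm"
proof -
  have ne: "SS \<noteq> {}" using SS1 by auto
  show "tm \<in> SS" unfolding tm_def using Max_in[OF SS_fin ne] .
  show "\<And>t. t \<in> SS \<Longrightarrow> t \<le> tm" unfolding tm_def using SS_fin by simp
qed

lemma jst: "jst \<in> Cs n k (Y tm)" "jst < n+k"
proof -
  have "Cs n k (Y tm) \<noteq> {}" using tm(1) unfolding SS_def by auto
  then show "jst \<in> Cs n k (Y tm)" unfolding jst_def by (meson someI_ex ex_in_conv)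
  then show "jst < n+k" using Cs_sub by auto
qed

lemma jst_t: "t \<in> SS \<Longrightarrow> jst \<in> Cs n k (Y t)"
proof -
  assume "t \<in> SS"
  then have "t \<le> tm" by (rule tm(2))
  then have "Y t \<subseteq> Y tm" by (rule Ys_mono)
  then have "Cs n k (Y tm) \<subseteq> Cs n k (Y t)" by (rule Cs_anti)
  then show ?thesis using jst(1) by blast
qed

lemma s0_lt: "s0 < n+k" unfolding s0_def using NN_pos by auto
lemma phi_lt: "phi u < n+k" unfolding phi_def using NN_pos by auto

lemma phi_alt: "phi u = (jst + (n + u)) mod (n+k)"
  unfolding phi_def s0_def by (simp add: mod_add_left_eq add.assoc)

lemma phi_W: "u \<le> k \<Longrightarrow> incx n k (phi u) jst"
proof -
  assume u: "u \<le> k"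
  show ?thesis
  proof (cases "u = k")
    case True
    have "phi u = jst" unfolding phi_alt True using jst(2) by simp
    then show ?thesis unfolding incx_def using jst(2) by simp
  next
    case False
    have "(jst + (n+k) - (jst + (n+u)) mod (n+k)) mod (n+k) = (n+k) - (n+u)"
      using modN_back[OF jst(2), of "n+u"] u n3 False by auto
    then show ?thesis unfolding incx_def phi_alt using u by auto
  qed
qed

lemma W_phi:
  assumes i: "i < n+k" and inc: "incx n k i jst"
  shows "\<exists>u\<le>k. i = phi u"
proof -
  define d where "d = (jst + (n+k) - i) mod (n+k)"
  have dk: "d \<le> k" using inc unfolding incx_def d_def by auto
  have "(i + d) mod (n+k) = jst" unfolding d_def using modN_rt[OF i jst(2)] .
  then have "(jst + ((n+k) - d)) mod (n+k) = i" using modN_inv[OF i] dk by auto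
  moreover have "(n+k) - d = n + (k - d)" using dk by auto
  ultimately have "i = phi (k - d)" unfolding phi_alt by simp
  then show ?thesis by (intro exI[of _ "k-d"]) auto
qed

lemma phi_inj: "u \<le> k \<Longrightarrow> v \<le> k \<Longrightarrow> phi u = phi v \<Longrightarrow> u = v"
proof -
  assume "u \<le> k" "v \<le> k" "phi u = phi v"
  moreover have "u < n+k" "v < n+k" using calculation n3 by auto
  ultimately show ?thesis unfolding phi_def using modN_inj[OF s0_lt] by blast
qed

lemma Hs_sub_W: "t \<in> SS \<Longrightarrow> i \<in> Hs n k (Y t) \<Longrightarrow> \<exists>u\<le>k. i = phi u"
proof -
  assume t: "t \<in> SS" and i: "i \<in> Hs n k (Y t)"
  have "incx n k i jst" using Hs_inc[OF i jst_t[OF t]] .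
  moreover have "i < n+k" using i unfolding Hs_def by auto
  ultimately show ?thesis using W_phi by auto
qed

lemma gamma: "\<exists>g\<le>k. \<forall>t\<in>SS. g \<in> PP t"
proof -
  obtain x0 where x0: "x0 < n+k" "Y 1 = {x0}" using Y1 by auto
  have inY: "t \<in> SS \<Longrightarrow> x0 \<in> Y t" for t using x0 Ys_mono[of 1 t "n+k" r] unfolding SS_def by auto
  have inH: "t \<in> SS \<Longrightarrow> x0 \<in> Hs n k (Y t)" for t using inY Y_Hs[OF Ys_sub] by blast
  obtain g where g: "g \<le> k" "x0 = phi g" using Hs_sub_W[OF SS1 inH[OF SS1]] by auto
  show ?thesis using g inH unfolding PP_def by auto
qed

lemma PP_nest: "t \<in> SS \<Longrightarrow> t' \<in> SS \<Longrightarrow> t \<le> t' \<Longrightarrow> PP t \<subseteq> PP t'"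
  unfolding PP_def using Hs_anti_C[OF Cs_anti[OF Ys_mono]] by blast

lemma PP_conv:
  assumes t: "t \<in> SS" and u12: "u1 \<le> u2" and u23: "u2 \<le> u3" and u1: "u1 \<in> PP t" and u3: "u3 \<in> PP t"
  shows "u2 \<in> PP t"
proof (rule ccontr)
  assume nu2: "u2 \<notin> PP t"
  let ?U = "Us n k (Y t)"
  let ?H = "Hs n k (Y t)"
  have u3k: "u3 \<le> k" using u3 unfolding PP_def by auto
  have u2k: "u2 \<le> k" using u23 u3k by auto
  have Heq: "?H = {..<n+k} - ?U" by (rule Hs_eq)
  have p2U: "phi u2 \<in> ?U" using nu2 u2k phi_lt Heq unfolding PP_def by auto
  have p3U: "phi u3 \<notin> ?U" using u3 Heq unfolding PP_def by auto
  have p1U: "phi u1 \<notin> ?U" using u1 Heq unfolding PP_def by auto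
  have l12: "u1 < u2" using u12 p1U p2U by (metis le_neq_implies_less)
  have l23: "u2 < u3" using u23 p2U p3U by (metis le_neq_implies_less)
  have "(phi u2 + (u3 - u2)) mod (n+k) = (s0 + u2 + (u3 - u2)) mod (n+k)"
    unfolding phi_def by (simp add: mod_add_left_eq)
  also have "s0 + u2 + (u3 - u2) = s0 + u3" using l23 by simp
  finally have "(phi u2 + (u3 - u2)) mod (n+k) = phi u3" unfolding phi_def .
  then obtain d1 where d1: "d1 < u3 - u2" "(phi u2 + d1) mod (n+k) \<in> EndsN (n+k) ?U"
    using walk[OF p2U, of "u3 - u2" "n+k"] p3U phi_lt by auto
  define e1 where "e1 = (phi u2 + d1) mod (n+k)"
  have e1: "e1 = (s0 + (u2 + d1)) mod (n+k)" unfolding e1_def phi_def by (simp add: mod_add_left_eq add.assoc)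
  define z where "z = (s0 + (n+k-1)) mod (n+k)"
  have z_alt: "z = (jst + (n-1)) mod (n+k)"
  proof -
    have "z = (jst + n + (n+k-1)) mod (n+k)" unfolding z_def s0_def by (simp add: mod_add_left_eq)
    also have "jst + n + (n+k-1) = (jst + (n-1)) + (n+k)" using n3 by simp
    finally show ?thesis by simp
  qed
  have zlt: "z < n+k" unfolding z_def using NN_pos by auto
  have "1 \<le> n - 1" "n - 1 \<le> n - 1" using n3 by auto
  then have "\<not> incx n k z jst" using notinc_iff[OF n3 zlt jst(2)] z_alt by blast
  then have zU: "z \<in> ?U" using zlt jst_t[OF t] unfolding Us_def by auto
  have "(z + (u1 + 1)) mod (n+k) = phi u1"
  proof -
    have "(z + (u1 + 1)) mod (n+k) = ((s0 + (n+k-1)) mod (n+k) + (u1 + 1)) mod (n+k)" by (simp only: z_def)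
    also have "\<dots> = (s0 + (n+k-1) + (u1+1)) mod (n+k)" by (rule mod_add_left_eq)
    also have "s0 + (n+k-1) + (u1+1) = (s0 + u1) + (n+k)" using n3 by simp
    finally show ?thesis unfolding phi_def by simp
  qed
  then obtain d2 where d2: "d2 < u1 + 1" "(z + d2) mod (n+k) \<in> EndsN (n+k) ?U"
    using walk[OF zU, of "u1 + 1" "n+k"] p1U zlt by auto
  define e2 where "e2 = (z + d2) mod (n+k)"
  have ne: "e1 \<noteq> e2"
  proof (cases "d2 = 0")
    case True
    have "e2 = (s0 + (n+k-1)) mod (n+k)" unfolding e2_def True z_def by simp
    moreover have "u2 + d1 < n+k" "n+k-1 < n+k" "u2 + d1 \<noteq> n+k-1" using d1 u3k n3 by auto
    ultimately show ?thesis using e1 modN_inj[OF s0_lt] by metis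
  next
    case False
    have "e2 = ((s0 + (n+k-1)) mod (n+k) + d2) mod (n+k)" unfolding e2_def z_def by (simp only:)
    also have "\<dots> = (s0 + (n+k-1) + d2) mod (n+k)" by (rule mod_add_left_eq)
    also have "s0 + (n+k-1) + d2 = (s0 + (d2 - 1)) + (n+k)" using False n3 by simp
    finally have "e2 = (s0 + (d2 - 1)) mod (n+k)" by simp
    moreover have "u2 + d1 < n+k" "d2 - 1 < n+k" "u2 + d1 \<noteq> d2 - 1" using d1 d2 u3k n3 l12 by auto
    ultimately show ?thesis using e1 modN_inj[OF s0_lt] by metis
  qed
  have "{e1, e2} \<subseteq> EndsN (n+k) ?U" using d1 d2 unfolding e1_def e2_def by auto
  moreover have "finite (EndsN (n+k) ?U)" by (rule finite_subset[OF _ finite_Us]) (auto simp: EndsN_def)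
  ultimately have "card {e1, e2} \<le> card (EndsN (n+k) ?U)" by (rule card_mono[rotated])
  then have "2 \<le> card (EndsN (n+k) ?U)" using ne by auto
  moreover have "Cs n k (Y t) \<noteq> {}" using t unfolding SS_def by auto
  ultimately have "bad n k (Y t)" unfolding bad_def by auto
  then show False using good t unfolding SS_def by auto
qed

lemma dominate: "\<exists>\<tau>. h_contiguous n k \<tau> \<and> length \<tau> = k+1 \<and> Tr n k r \<subseteq> Tset n k \<tau>"
proof -
  obtain g where g: "g \<le> k" "\<forall>t\<in>SS. g \<in> PP t" using gamma by auto
  have "\<exists>xs. distinct xs \<and> set xs = {..k} \<and> length xs = k+1
     \<and> (\<forall>i \<le> k+1. set (take i xs) = {} \<or> (\<exists>a b. a \<le> b \<and> b \<le> k \<and> set (take i xs) = {a..b}))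
     \<and> (\<forall>t\<in>SS. \<forall>i<k+1. \<forall>i'\<le>i. xs ! i \<in> PP t \<longrightarrow> xs ! i' \<in> PP t)"
  proof (rule abstract_order[OF g(1) SS_fin])
    show "\<And>t. t \<in> SS \<Longrightarrow> PP t \<subseteq> {..k}" unfolding PP_def by auto
    show "\<And>t. t \<in> SS \<Longrightarrow> g \<in> PP t" using g(2) by auto
    show "\<And>t u1 u2 u3. t \<in> SS \<Longrightarrow> u1 \<le> u2 \<Longrightarrow> u2 \<le> u3 \<Longrightarrow> u1 \<in> PP t \<Longrightarrow> u3 \<in> PP t \<Longrightarrow> u2 \<in> PP t"
      by (rule PP_conv)
    show "\<And>t t'. t \<in> SS \<Longrightarrow> t' \<in> SS \<Longrightarrow> t \<le> t' \<Longrightarrow> PP t \<subseteq> PP t'" by (rule PP_nest)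
  qed
  then obtain xs where H: "distinct xs \<and> set xs = {..k} \<and> length xs = k+1
     \<and> (\<forall>i \<le> k+1. set (take i xs) = {} \<or> (\<exists>a b. a \<le> b \<and> b \<le> k \<and> set (take i xs) = {a..b}))
     \<and> (\<forall>t\<in>SS. \<forall>i<k+1. \<forall>i'\<le>i. xs ! i \<in> PP t \<longrightarrow> xs ! i' \<in> PP t)" by (rule exE)
  have dxs: "distinct xs" and sxs: "set xs = {..k}" and lxs: "length xs = k+1" using H by simp_all
  have intv: "\<And>i. i \<le> k+1 \<Longrightarrow> set (take i xs) = {} \<or> (\<exists>a b. a \<le> b \<and> b \<le> k \<and> set (take i xs) = {a..b})"
    using H by simp
  have down: "\<And>t i i'. t \<in> SS \<Longrightarrow> i < k+1 \<Longrightarrow> i' \<le> i \<Longrightarrow> xs ! i \<in> PP t \<Longrightarrow> xs ! i' \<in> PP t"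
    using H by simp
  define f where "f u = EA (phi u)" for u
  define \<tau> where "\<tau> = map f xs"
  have ltau: "length \<tau> = k+1" unfolding \<tau>_def using lxs by simp
  have injf: "inj_on f (set xs)" unfolding f_def sxs using phi_inj by (auto intro: inj_onI)
  have dtau: "distinct \<tau>" unfolding \<tau>_def using dxs injf by (simp add: distinct_map)
  have stau: "set \<tau> \<subseteq> setA n k" unfolding \<tau>_def f_def setA_def using phi_lt by auto
  have ctau: "contiguous n k (set (take i \<tau>))" if i: "i \<le> length \<tau>" for i
  proof -
    have eq: "set (take i \<tau>) = f ` set (take i xs)" unfolding \<tau>_def by (simp add: take_map)
    have "i \<le> k+1" using i ltau by simp
    from intv[OF this] show ?thesis
    proof
      assume "set (take i xs) = {}" then show ?thesis unfolding eq contiguous_def by simp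
    next
      assume "\<exists>a b. a \<le> b \<and> b \<le> k \<and> set (take i xs) = {a..b}"
      then obtain a b where ab: "a \<le> b" "b \<le> k" "set (take i xs) = {a..b}" by blast
      define s where "s = (s0 + a) mod (n+k)"
      have sN: "s < n+k" unfolding s_def using NN_pos by simp
      have lN: "b - a + 1 \<le> n+k" using ab n3 by simp
      have "f ` {a..b} = {EA ((s + t) mod (n+k)) | t. t < b - a + 1}"
      proof
        show "f ` {a..b} \<subseteq> {EA ((s + t) mod (n+k)) | t. t < b - a + 1}"
        proof
          fix y assume "y \<in> f ` {a..b}"
          then obtain u where u: "a \<le> u" "u \<le> b" "y = f u" by auto
          have "(s + (u - a)) mod (n+k) = (s0 + a + (u - a)) mod (n+k)" unfolding s_def by (rule mod_add_left_eq)
          also have "s0 + a + (u - a) = s0 + u" using u by simp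
          finally have "y = EA ((s + (u-a)) mod (n+k))" using u unfolding f_def phi_def by simp
          moreover have "u - a < b - a + 1" using u by simp
          ultimately show "y \<in> {EA ((s + t) mod (n+k)) | t. t < b - a + 1}" by blast
        qed
        show "{EA ((s + t) mod (n+k)) | t. t < b - a + 1} \<subseteq> f ` {a..b}"
        proof
          fix y assume "y \<in> {EA ((s + t) mod (n+k)) | t. t < b - a + 1}"
          then obtain t where t: "t < b - a + 1" "y = EA ((s + t) mod (n+k))" by auto
          have "(s + t) mod (n+k) = (s0 + a + t) mod (n+k)" unfolding s_def by (rule mod_add_left_eq)
          then have "y = f (a + t)" using t unfolding f_def phi_def by (simp add: add.assoc)
          moreover have "a + t \<in> {a..b}" using t ab by auto
          ultimately show "y \<in> f ` {a..b}" by blast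
        qed
      qed
      then show ?thesis unfolding contiguous_def eq ab(3) using sN lN by blast
    qed
  qed
  have hc: "h_contiguous n k \<tau>" unfolding h_contiguous_def using dtau stau ctau by blast
  have sub: "Tr n k r \<subseteq> Tset n k \<tau>"
  proof
    fix p assume "p \<in> Tr n k r"
    then obtain x j where p: "p = (EA x, EB j)" "x < n+k" "j \<in> Cs n k (Y (Suc (r x)))" unfolding Tr_def by auto
    define t where "t = Suc (r x)"
    have "r x < n+k" using r p(2) unfolding bij_betw_def by auto
    then have tS: "t \<in> SS" unfolding SS_def t_def using p(3) by auto
    have xY: "x \<in> Y t" unfolding t_def Ys_def using p(2) by auto
    have xH: "x \<in> Hs n k (Y t)" using xY Y_Hs[OF Ys_sub] by blast
    obtain u where u: "u \<le> k" "x = phi u" using Hs_sub_W[OF tS xH] by auto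
    have uP: "u \<in> PP t" unfolding PP_def using u xH by auto
    obtain i where i: "i < k+1" "xs ! i = u" using u sxs lxs by (metis atMost_iff in_set_conv_nth)
    have jC: "j \<in> Cs n k (Y t)" using p(3) unfolding t_def .
    have jN: "j < n+k" using jC Cs_sub by auto
    have "EB j \<in> Tcol n k \<tau> i"
      unfolding Tcol_eq
    proof (intro CollectI allI impI)
      fix i' assume i': "i' \<le> i"
      have "xs ! i' \<in> PP t" using down[OF tS i(1) i'] uP i(2) by simp
      then have "phi (xs ! i') \<in> Hs n k (Y t)" unfolding PP_def by auto
      then have "incx n k (phi (xs ! i')) j" using Hs_inc jC by auto
      moreover have "\<tau> ! i' = EA (phi (xs ! i'))" unfolding \<tau>_def f_def using i' i(1) lxs by simp
      ultimately show "(\<tau> ! i', EB j) \<in> Inc n k" using Inc_EA_EB phi_lt jN by auto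
    qed
    moreover have "\<tau> ! i = EA x" unfolding \<tau>_def f_def using i lxs u by simp
    ultimately show "p \<in> Tset n k \<tau>" unfolding Tset_def p(1) using i(1) ltau by force
  qed
  show ?thesis using hc ltau sub by blast
qed

end


lemma rev_levels:
  fixes f g :: "nat \<Rightarrow> nat"
  assumes fg: "\<And>i j. crown_less n k (EA i) (EB j) \<Longrightarrow> f i \<le> g j"
    and RI: "R \<subseteq> Inc n k" and Rgf: "\<And>i j. (EA i, EB j) \<in> R \<Longrightarrow> g j < f i"
  shows "reversible n k R"
proof -
  define lev where "lev x = (case x of EA i \<Rightarrow> 2 * f i | EB j \<Rightarrow> 2 * g j + 1)" for x
  define idx where "idx x = (case x of EA i \<Rightarrow> i | EB j \<Rightarrow> j)" for x
  define L where "L = {(x,y). x \<in> ground n k \<and> y \<in> ground n k \<and> (lev x < lev y \<or> (lev x = lev y \<and> idx x < idx y))}"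
  have inj: "x = y" if "lev x = lev y" "idx x = idx y" for x y
  proof (cases x; cases y)
    fix i i' assume "x = EA i" "y = EA i'" then show ?thesis using that unfolding idx_def by simp
  next
    fix i j assume "x = EA i" "y = EB j"
    then have "2 * f i = 2 * g j + 1" using that unfolding lev_def by simp
    then have False by presburger
    then show ?thesis ..
  next
    fix i j assume "x = EB j" "y = EA i"
    then have "2 * f i = 2 * g j + 1" using that unfolding lev_def by simp
    then have False by presburger
    then show ?thesis ..
  next
    fix j j' assume "x = EB j" "y = EB j'" then show ?thesis using that unfolding idx_def by simp
  qed
  have le: "linear_extension n k L"
    unfolding linear_extension_def
  proof (intro conjI allI impI ballI)
    show "L \<subseteq> ground n k \<times> ground n k" unfolding L_def by auto
    fix x show "(x,x) \<notin> L" unfolding L_def by auto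
  next
    show "trans L" unfolding L_def trans_def by auto
  next
    fix x y assume xy: "x \<in> ground n k" "y \<in> ground n k" "x \<noteq> y"
    have "\<not> (lev x = lev y \<and> idx x = idx y)" using inj xy(3) by blast
    then have "lev x < lev y \<or> (lev x = lev y \<and> idx x < idx y) \<or> lev y < lev x \<or> (lev y = lev x \<and> idx y < idx x)"
      by linarith
    then show "(x,y) \<in> L \<or> (y,x) \<in> L" unfolding L_def using xy by blast
  next
    fix x y assume c: "crown_less n k x y"
    then obtain i j where ij: "x = EA i" "y = EB j" "i < n+k" "j < n+k" unfolding crown_less_def by auto
    then have "x \<in> ground n k" "y \<in> ground n k" unfolding ground_def setA_def setB_def by auto
    moreover have "lev x < lev y" using fg[of i j] c ij unfolding lev_def by auto
    ultimately show "(x,y) \<in> L" unfolding L_def by auto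
  qed
  have "\<forall>(a,b)\<in>R. (b,a) \<in> L"
  proof (intro ballI)
    fix p assume p: "p \<in> R"
    then obtain i j where ij: "p = (EA i, EB j)" using Inc_shape RI by blast
    have "(EA i, EB j) \<in> Inc n k" using p ij RI by auto
    then have gr: "EA i \<in> ground n k" "EB j \<in> ground n k"
      using Inc_mem setA_ground setB_ground by blast+
    have "g j < f i" using Rgf p ij by auto
    then have "lev (EB j) < lev (EA i)" unfolding lev_def by auto
    then show "case p of (a,b) \<Rightarrow> (b,a) \<in> L" using gr ij unfolding L_def by auto
  qed
  then show ?thesis unfolding reversible_def using RI le by blast
qed

lemma Tset_Inc: "Tset n k \<tau> \<subseteq> Inc n k"
  unfolding Tset_def Tcol_eq by auto

lemma Tset_reversible:
  assumes hc: "h_contiguous n k \<tau>"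
  shows "reversible n k (Tset n k \<tau>)"
proof -
  have dist: "distinct \<tau>" and sA: "set \<tau> \<subseteq> setA n k" using hc unfolding h_contiguous_def by auto
  define pos where "pos i = (LEAST t. \<tau> ! t = EA i)" for i
  have pos_eq: "pos i = t" if "t < length \<tau>" "\<tau> ! t = EA i" for i t
    unfolding pos_def
  proof (rule Least_equality)
    show "\<tau> ! t = EA i" by fact
    fix t' assume t': "\<tau> ! t' = EA i"
    show "t \<le> t'"
    proof (rule ccontr)
      assume "\<not> t \<le> t'"
      then have "t' < length \<tau>" "t' \<noteq> t" using that by auto
      then show False using dist t' that nth_eq_iff_index_eq by metis
    qed
  qed
  define f where "f i = (if EA i \<in> set \<tau> then length \<tau> - pos i else 0)" for i
  define g where "g j = Max (insert 0 (f ` {i. i < n+k \<and> \<not> incx n k i j}))" for j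
  have fing: "finite (insert 0 (f ` {i. i < n+k \<and> \<not> incx n k i j}))" for j by auto
  show ?thesis
  proof (rule rev_levels[of n k f g])
    fix i j assume c: "crown_less n k (EA i) (EB j)"
    then have "i < n+k" "\<not> incx n k i j" unfolding cl_EA_EB incx_def by auto
    then show "f i \<le> g j" unfolding g_def using fing by (intro Max_ge) auto
  next
    show "Tset n k \<tau> \<subseteq> Inc n k" by (rule Tset_Inc)
  next
    fix i j assume "(EA i, EB j) \<in> Tset n k \<tau>"
    then obtain t where t: "t < length \<tau>" "\<tau> ! t = EA i" "\<forall>t'\<le>t. (\<tau> ! t', EB j) \<in> Inc n k"
      unfolding Tset_def Tcol_eq by auto
    have fi: "f i = length \<tau> - t" unfolding f_def using pos_eq[OF t(1,2)] t(1,2) nth_mem by force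
    have "\<forall>a \<in> insert 0 (f ` {i. i < n+k \<and> \<not> incx n k i j}). a < length \<tau> - t"
    proof
      fix a assume "a \<in> insert 0 (f ` {i. i < n+k \<and> \<not> incx n k i j})"
      then show "a < length \<tau> - t"
      proof
        assume "a = 0" then show ?thesis using t(1) by simp
      next
        assume "a \<in> f ` {i. i < n+k \<and> \<not> incx n k i j}"
        then obtain i' where i': "i' < n+k" "\<not> incx n k i' j" "a = f i'" by auto
        show ?thesis
        proof (cases "EA i' \<in> set \<tau>")
          case False then show ?thesis using i' t(1) unfolding f_def by simp
        next
          case True
          then obtain t'' where t'': "t'' < length \<tau>" "\<tau> ! t'' = EA i'" by (metis in_set_conv_nth)
          have "\<not> t'' \<le> t"
          proof
            assume "t'' \<le> t"
            then have "(EA i', EB j) \<in> Inc n k" using t(3) t'' by metis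
            then show False using i' Inc_EA_EB by auto
          qed
          then show ?thesis using i' True pos_eq[OF t''] t'' t(1) unfolding f_def by simp
        qed
      qed
    qed
    then have "g j < length \<tau> - t" unfolding g_def using fing by (subst Max_less_iff) auto
    then show "g j < f i" using fi by simp
  qed
qed


definition rank :: "nat \<Rightarrow> nat \<Rightarrow> (elt \<times> elt) set \<Rightarrow> nat \<Rightarrow> nat" where
  "rank n k L x = card {x'. x' < n+k \<and> (EA x, EA x') \<in> L}"

lemma rank_less:
  assumes L: "linear_extension n k L" and xy: "(EA x, EA y) \<in> L" and y: "y < n+k"
  shows "rank n k L y < rank n k L x"
  unfolding rank_def
proof (rule psubset_card_mono)
  show "finite {x'. x' < n+k \<and> (EA x, EA x') \<in> L}" by auto
  show "{x'. x' < n+k \<and> (EA y, EA x') \<in> L} \<subset> {x'. x' < n+k \<and> (EA x, EA x') \<in> L}"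
  proof
    show "{x'. x' < n+k \<and> (EA y, EA x') \<in> L} \<subseteq> {x'. x' < n+k \<and> (EA x, EA x') \<in> L}"
      using linext_trans[OF L xy] by auto
    have "(EA y, EA y) \<notin> L" using linext_props(2)[OF L] by auto
    then show "{x'. x' < n+k \<and> (EA y, EA x') \<in> L} \<noteq> {x'. x' < n+k \<and> (EA x, EA x') \<in> L}"
      using xy y by blast
  qed
qed

lemma rank_bij:
  assumes L: "linear_extension n k L"
  shows "bij_betw (rank n k L) {..<n+k} {..<n+k}"
proof -
  have into: "rank n k L ` {..<n+k} \<subseteq> {..<n+k}"
  proof
    fix y assume "y \<in> rank n k L ` {..<n+k}"
    then obtain x where x: "x < n+k" "y = rank n k L x" by auto
    have "{x'. x' < n+k \<and> (EA x, EA x') \<in> L} \<subseteq> {..<n+k} - {x}"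
      using linext_props(2)[OF L] by auto
    then have "y \<le> card ({..<n+k} - {x})" unfolding x(2) rank_def by (intro card_mono) auto
    also have "\<dots> = n + k - 1" using x by simp
    finally show "y \<in> {..<n+k}" using x by auto
  qed
  have inj: "inj_on (rank n k L) {..<n+k}"
  proof (rule inj_onI)
    fix x y assume x: "x \<in> {..<n+k}" and y: "y \<in> {..<n+k}" and e: "rank n k L x = rank n k L y"
    show "x = y"
    proof (rule ccontr)
      assume "x \<noteq> y"
      moreover have "EA x \<in> ground n k" "EA y \<in> ground n k" using x y unfolding ground_def setA_def by auto
      ultimately have "(EA x, EA y) \<in> L \<or> (EA y, EA x) \<in> L" using linext_props(4)[OF L] by auto
      then show False using rank_less[OF L] x y e by (metis lessThan_iff less_irrefl)
    qed
  qed
  have "rank n k L ` {..<n+k} = {..<n+k}" using endo_inj_surj[OF _ into inj] by simp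
  then show ?thesis using inj unfolding bij_betw_def by simp
qed

lemma RL_Tr:
  assumes L: "linear_extension n k L"
  shows "RL n k L \<subseteq> Tr n k (rank n k L)"
proof
  fix p assume "p \<in> RL n k L"
  then have pI: "p \<in> Inc n k" and pL: "(snd p, fst p) \<in> L" unfolding RL_def by auto
  obtain x j where p: "p = (EA x, EB j)" using Inc_shape[OF pI] by auto
  have xj: "x < n+k" "j < n+k" "incx n k x j" using pI p Inc_EA_EB by auto
  have jC: "j \<in> Cs n k (Ys (n+k) (rank n k L) (Suc (rank n k L x)))"
    unfolding Cs_def Ys_def
  proof (intro CollectI conjI ballI xj(2))
    fix x' assume x': "x' \<in> {x'. x' < n+k \<and> rank n k L x' < Suc (rank n k L x)}"
    show "incx n k x' j"
    proof (cases "x' = x")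
      case True then show ?thesis using xj by simp
    next
      case False
      have g: "EA x \<in> ground n k" "EA x' \<in> ground n k" using x' xj unfolding ground_def setA_def by auto
      have "(EA x', EA x) \<notin> L" using rank_less[OF L, of x' x] x' xj by auto
      then have "(EA x, EA x') \<in> L" using linext_props(4)[OF L g] False by auto
      then have bx': "(EB j, EA x') \<in> L" using pL p linext_trans[OF L] by auto
      have "\<not> crown_less n k (EA x') (EB j)"
      proof
        assume "crown_less n k (EA x') (EB j)"
        then have "(EA x', EB j) \<in> L" using linext_props(5)[OF L] by auto
        then show False using bx' linext_asym[OF L] by auto
      qed
      then show ?thesis using x' xj unfolding cl_EA_EB incx_def by auto
    qed
  qed
  show "p \<in> Tr n k (rank n k L)" unfolding Tr_def p using xj(1) jC by auto
qed

lemma finite_Tr: "finite (Tr n k r)"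
proof -
  have "Tr n k r \<subseteq> (EA ` {..<n+k}) \<times> (EB ` {..<n+k})" unfolding Tr_def using Cs_sub[of n k] by blast
  then show ?thesis by (rule finite_subset) auto
qed

lemma main_dichotomy:
  assumes n3: "3 \<le> n" and R: "maximal_reversible n k R"
  shows "canonical_reversible n k R \<or> (n \<le> k \<and> 2 * card R + n * (n - 1) \<le> (k+1) * (k+2) + 2)"
proof -
  obtain L where L: "linear_extension n k L" and RL: "R = RL n k L" using maxrev_RL[OF R] by auto
  define r where "r = rank n k L"
  have r: "bij_betw r {..<n+k} {..<n+k}" unfolding r_def by (rule rank_bij[OF L])
  have RT: "R \<subseteq> Tr n k r" unfolding RL r_def by (rule RL_Tr[OF L])
  show ?thesis
  proof (cases "\<exists>t\<in>{1..n+k}. bad n k (Ys (n+k) r t)")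
    case True
    have b: "n \<le> k \<and> 2 * card (Tr n k r) + n * (n - 1) \<le> (k+1) * (k+2) + 2"
      by (rule bound_main[OF n3 r True])
    have "card R \<le> card (Tr n k r)" using RT finite_Tr by (rule card_mono[rotated])
    then show ?thesis using b by auto
  next
    case False
    then have good: "\<And>t. t \<in> {1..n+k} \<Longrightarrow> \<not> bad n k (Ys (n+k) r t)" by auto
    obtain \<tau> where tau: "h_contiguous n k \<tau>" "length \<tau> = k+1" "Tr n k r \<subseteq> Tset n k \<tau>"
      using dominate[OF n3 r good] by auto
    have "R \<subseteq> Tset n k \<tau>" using RT tau(3) by auto
    moreover have "reversible n k (Tset n k \<tau>)" by (rule Tset_reversible[OF tau(1)])
    ultimately have "Tset n k \<tau> = R" using R unfolding maximal_reversible_def by blast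
    then have "canonical_reversible n k R" unfolding canonical_reversible_def using tau by blast
    then show ?thesis by auto
  qed
qed

theorem theorem1p3:
  fixes n k :: nat
  assumes "n \<ge> 3"
  shows "(\<forall>S. maximal_reversible n k S \<longrightarrow> maximal_independent n k S)
       \<and> (n > k \<longrightarrow> (\<forall>S. maximal_reversible n k S \<longrightarrow> canonical_reversible n k S))
       \<and> (\<forall>S. maximal_reversible n k S \<and> \<not> canonical_reversible n k S \<longrightarrow>
             n \<le> k \<and> real (card S) \<le> real ((k+1)*(k+2)) / 2 - real (n*(n-1)) / 2 + 1)"
proof (intro conjI allI impI)
  fix S assume "maximal_reversible n k S"
  then show "maximal_independent n k S" using part1 assms by blast
next
  fix S assume "n > k" "maximal_reversible n k S"
  then show "canonical_reversible n k S" using main_dichotomy assms by fastforce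
next
  fix S assume S: "maximal_reversible n k S \<and> \<not> canonical_reversible n k S"
  then have h: "n \<le> k \<and> 2 * card S + n * (n - 1) \<le> (k+1) * (k+2) + 2"
    using main_dichotomy assms by blast
  then show "n \<le> k" by simp
  have "real (2 * card S + n * (n - 1)) \<le> real ((k+1) * (k+2) + 2)" using h by (simp only: of_nat_le_iff)
  then have "2 * real (card S) + real (n * (n - 1)) \<le> real ((k+1) * (k+2)) + 2" by simp
  then show "real (card S) \<le> real ((k+1)*(k+2)) / 2 - real (n*(n-1)) / 2 + 1" by linarith
qed


end
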